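(* In the LHARG setting with stochastic discount factor and risk-neutral measure $\mathbb{Q}$ as described in the context, assume the no-arbitrage condition $\nu_2=\lambda+\tfrac12$, let $Y^*=-\tfrac{\lambda^2}{2}-\nu_1+\tfrac18$ and assume $1-\theta Y^*>0$. Set $\kappa=\frac{1}{1-\theta Y^*}$ and $$\beta_i^*=\kappa\beta_i,\quad \alpha_j^*=\kappa\alpha_j,\quad \theta^*=\kappa\theta,\quad d^*=\kappa d,\quad \delta^*=\delta,\quad \gamma^*=\gamma+\lambda+\tfrac12,\quad\lambda^*=-\tfrac12$$ (in the heterogeneous case this means $\beta_l^*=\kappa\beta_l$, $\alpha_l^*=\kappa\alpha_l$ for $l=d,w,m$). Then under $\mathbb{Q}$ the pair $(y_t,\mathrm{RV}_t)$ again follows an LHARG model with these starred parameters: there are random variables $\epsilon^*_t$, i.i.d. $\mathcal{N}(0,1)$ under $\mathbb{Q}$ with $\epsilon^*_{t+1}$ independent of $(\mathcal{F}_t,\mathrm{RV}_{t+1})$, such that $y_{t+1}=r+\lambda^*\mathrm{RV}_{t+1}+\sqrt{\mathrm{RV}_{t+1}}\,\epsilon^*_{t+1}$ and, conditionally on $\mathcal{F}_t$, $\mathrm{RV}_{t+1}\sim\bar\gamma(\delta^*,\Theta^*_t,\theta^* )$ with $\Theta^*_t=d^*+\sum_{i=1}^p\beta^*_i\mathrm{RV}_{t+1-i}+\sum_{j=1}^q\alpha^*_j(\epsilon^*_{t+1-j}-\gamma^*\sqrt{\mathrm{RV}_{t+1-j}})^2$.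
   Context: LHARG setting. Discrete time. $(\epsilon_t)$ are i.i.d. $\mathcal{N}(0,1)$ under $\mathbb{P}$ and $(\mathrm{RV}_t)$ is a positive process (realized variance); $\mathcal{F}_t$ is the $\sigma$-algebra generated by $\{\epsilon_u,\mathrm{RV}_u:u\le t\}$. Parameters: $r\in\mathbb{R}$ (risk-free rate), $\lambda\in\mathbb{R}$, $\delta>0$, $\theta>0$, $d\ge0$, $\gamma\in\mathbb{R}$, integers $p,q\ge1$, $\beta_1,\dots,\beta_p\ge0$, $\alpha_1,\dots,\alpha_q\ge0$. Leverage: $\ell_t=(\epsilon_t-\gamma\sqrt{\mathrm{RV}_t})^2$. Log-returns: $y_{t+1}=\ln(S_{t+1}/S_t)=r+\lambda\mathrm{RV}_{t+1}+\sqrt{\mathrm{RV}_{t+1}}\,\epsilon_{t+1}$, with $\epsilon_{t+1}$ independent of $(\mathcal{F}_t,\mathrm{RV}_{t+1})$. Conditionally on $\mathcal{F}_t$, $\mathrm{RV}_{t+1}$ has the noncentral gamma law $\bar\gamma(\delta,\Theta_t,\theta)$ with $\Theta_t=d+\sum_{i=1}^p\beta_i\mathrm{RV}_{t+1-i}+\sum_{j=1}^q\alpha_j\ell_{t+1-j}$. Here $\bar\gamma(\delta,\Theta,\theta)$ (shape $\delta$, noncentrality $\Theta\ge0$, scale $\theta$) is the law of $\theta G$ where, conditionally on $N\sim\mathrm{Poisson}(\Theta)$, $G\sim\mathrm{Gamma}(\delta+N,1)$; for $X\sim\bar\gamma(\delta,\Theta,\theta)$ and $\theta x<1$, $\mathbb{E}[e^{xX}]=\exp(-\delta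 w(x,\theta)+\Theta v(x,\theta))$, where $v(x,\theta)=\frac{\theta x}{1-\theta x}$ and $w(x,\theta)=\ln(1-\theta x)$. (In the heterogeneous LHARG model proper, $p=q=22$, $\beta_1=\beta_d$, $\beta_i=\beta_w/4$ for $2\le i\le5$, $\beta_i=\beta_m/17$ for $6\le i\le22$, and likewise for $\alpha_j$ with $\alpha_d,\alpha_w,\alpha_m$.) Stochastic discount factor: $M_{s,s+1}=e^{-\nu_1\mathrm{RV}_{s+1}-\nu_2y_{s+1}}/\mathbb{E}^{\mathbb{P}}[e^{-\nu_1\mathrm{RV}_{s+1}-\nu_2y_{s+1}}\mid\mathcal{F}_s]$; the measure $\mathbb{Q}$ is defined by $\mathbb{E}^{\mathbb{Q}}[X\mid\mathcal{F}_t]=\mathbb{E}^{\mathbb{P}}[M_{t,t+1}\cdots M_{T-1,T}X\mid\mathcal{F}_t]$ for $\mathcal{F}_T$-measurable $X$. *)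

theory Defs
  imports "HOL-Probability.Probability"
begin

definition gen_sigma :: "'a measure \<Rightarrow> ('a \<Rightarrow> real) set \<Rightarrow> 'a measure" where
  "gen_sigma M Xs = sigma (space M) (\<Union>X\<in>Xs. {X -` B \<inter> space M | B. B \<in> sets borel})"

(* F_t = sigma(eps_u, RV_u : u \<le> t); time is integer-valued, negative times = presample values *)
definition filt :: "'a measure \<Rightarrow> (int \<Rightarrow> 'a \<Rightarrow> real) \<Rightarrow> (int \<Rightarrow> 'a \<Rightarrow> real) \<Rightarrow> int \<Rightarrow> 'a measure" where
  "filt M eps RV t = gen_sigma M ({eps u | u. u \<le> t} \<union> {RV u | u. u \<le> t})"

(* density of the noncentral gamma law bar-gamma(delta, Theta, theta): law of theta*G,
   G | N ~ Gamma(delta+N,1), N ~ Poisson(Theta) *)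
definition ncgamma_density :: "real \<Rightarrow> real \<Rightarrow> real \<Rightarrow> real \<Rightarrow> real" where
  "ncgamma_density \<delta> \<Theta> \<theta> x =
     (if x \<le> 0 then 0 else
       (\<Sum>n. exp (-\<Theta>) * \<Theta> ^ n / fact n *
          (x powr (\<delta> + real n - 1) * exp (- x / \<theta>) / (\<theta> powr (\<delta> + real n) * Gamma (\<delta> + real n)))))"

definition ncgamma :: "real \<Rightarrow> real \<Rightarrow> real \<Rightarrow> real measure" where
  "ncgamma \<delta> \<Theta> \<theta> = density lborel (\<lambda>x. ennreal (ncgamma_density \<delta> \<Theta> \<theta> x))"

definition has_cond_law :: "'a measure \<Rightarrow> 'a measure \<Rightarrow> ('a \<Rightarrow> real) \<Rightarrow> ('a \<Rightarrow> real measure) \<Rightarrow> bool" where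
  "has_cond_law M F X N \<longleftrightarrow>
     (\<forall>B\<in>sets borel. AE \<omega> in M.
        real_cond_exp M F (\<lambda>\<omega>'. indicator B (X \<omega>') :: real) \<omega> = measure (N \<omega>) B)"

definition lharg_Theta :: "real \<Rightarrow> (nat \<Rightarrow> real) \<Rightarrow> (nat \<Rightarrow> real) \<Rightarrow> real \<Rightarrow> nat \<Rightarrow> nat \<Rightarrow>
    (int \<Rightarrow> 'a \<Rightarrow> real) \<Rightarrow> (int \<Rightarrow> 'a \<Rightarrow> real) \<Rightarrow> int \<Rightarrow> 'a \<Rightarrow> real" where
  "lharg_Theta d \<beta> \<alpha> \<gamma> p q RV eps t \<omega> =
     d + (\<Sum>i=1..p. \<beta> i * RV (t + 1 - int i) \<omega>)
       + (\<Sum>j=1..q. \<alpha> j * (eps (t + 1 - int j) \<omega> - \<gamma> * sqrt (RV (t + 1 - int j) \<omega>))\<^sup>2)"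

definition lharg :: "'a measure \<Rightarrow> (int \<Rightarrow> 'a measure) \<Rightarrow> (int \<Rightarrow> 'a \<Rightarrow> real) \<Rightarrow> (int \<Rightarrow> 'a \<Rightarrow> real)
    \<Rightarrow> (int \<Rightarrow> 'a \<Rightarrow> real) \<Rightarrow> real \<Rightarrow> real \<Rightarrow> real \<Rightarrow> real \<Rightarrow> real \<Rightarrow> real \<Rightarrow> nat \<Rightarrow> nat
    \<Rightarrow> (nat \<Rightarrow> real) \<Rightarrow> (nat \<Rightarrow> real) \<Rightarrow> bool" where
  "lharg M F eps RV y r lam \<delta> \<theta> d \<gamma> p q \<beta> \<alpha> \<longleftrightarrow>
     (\<forall>t. \<forall>\<omega>\<in>space M. RV t \<omega> > 0) \<and>
     (\<forall>t. eps t \<in> borel_measurable M \<and> RV t \<in> borel_measurable M) \<and>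
     (\<forall>t\<ge>1. distributed M lborel (eps t) (\<lambda>x. ennreal (std_normal_density x))) \<and>
     prob_space.indep_vars M (\<lambda>_. borel) eps {1..} \<and>
     (\<forall>t\<ge>0. prob_space.indep_set M
        (sets (sigma (space M) (sets (F t) \<union> {RV (t + 1) -` B \<inter> space M | B. B \<in> sets borel})))
        {eps (t + 1) -` B \<inter> space M | B. B \<in> sets borel}) \<and>
     (\<forall>t. \<forall>\<omega>\<in>space M. y (t + 1) \<omega> = r + lam * RV (t + 1) \<omega> + sqrt (RV (t + 1) \<omega>) * eps (t + 1) \<omega>) \<and>
     (\<forall>t\<ge>0. has_cond_law M (F t) (RV (t + 1))
        (\<lambda>\<omega>. ncgamma \<delta> (lharg_Theta d \<beta> \<alpha> \<gamma> p q RV eps t \<omega>) \<theta>))"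

definition sdf :: "'a measure \<Rightarrow> (int \<Rightarrow> 'a measure) \<Rightarrow> (int \<Rightarrow> 'a \<Rightarrow> real) \<Rightarrow> (int \<Rightarrow> 'a \<Rightarrow> real)
    \<Rightarrow> real \<Rightarrow> real \<Rightarrow> int \<Rightarrow> 'a \<Rightarrow> ennreal" where
  "sdf M F RV y \<nu>1 \<nu>2 s \<omega> =
     ennreal (exp (- \<nu>1 * RV (s + 1) \<omega> - \<nu>2 * y (s + 1) \<omega>)) /
     nn_cond_exp M (F s) (\<lambda>\<omega>'. ennreal (exp (- \<nu>1 * RV (s + 1) \<omega>' - \<nu>2 * y (s + 1) \<omega>'))) \<omega>"

end

theory Submission
  imports Defs
begin

definition nct :: "real \<Rightarrow> real \<Rightarrow> real \<Rightarrow> real \<Rightarrow> nat \<Rightarrow> real" where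
  "nct \<delta> \<Theta> \<theta> x n = exp (-\<Theta>) * \<Theta> ^ n / fact n *
          (x powr (\<delta> + real n - 1) * exp (- x / \<theta>) / (\<theta> powr (\<delta> + real n) * Gamma (\<delta> + real n)))"

lemma ncgamma_density_nct:
  "ncgamma_density \<delta> \<Theta> \<theta> x = (if x \<le> 0 then 0 else suminf (nct \<delta> \<Theta> \<theta> x))"
  unfolding ncgamma_density_def nct_def by simp

lemma nct_nonneg:
  assumes "\<delta> > 0" "\<Theta> \<ge> 0" "\<theta> > 0"
  shows "0 \<le> nct \<delta> \<Theta> \<theta> x n"
  unfolding nct_def using assms
  by (intro mult_nonneg_nonneg divide_nonneg_pos) (auto intro!: Gamma_real_pos)

lemma Gamma_Suc_shift:
  assumes "\<delta> > 0"
  shows "Gamma (\<delta> + real (Suc n)) = (\<delta> + real n) * Gamma (\<delta> + real n)"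
proof -
  have "\<delta> + real n > 0" using assms by (simp add: add_pos_nonneg)
  then have "\<delta> + real n \<notin> \<int>\<^sub>\<le>\<^sub>0" using nonpos_Ints_nonpos by force
  then show ?thesis using Gamma_plus1[of "\<delta> + real n"] by (simp add: add_ac)
qed

lemma nct_Suc:
  assumes "\<delta> > 0" "\<theta> > 0" "x > 0"
  shows "nct \<delta> \<Theta> \<theta> x (Suc n) = nct \<delta> \<Theta> \<theta> x n * (\<Theta> * x / (\<theta> * (real n + 1) * (\<delta> + real n)))"
proof -
  have g: "Gamma (\<delta> + real (Suc n)) = (\<delta> + real n) * Gamma (\<delta> + real n)"
    using Gamma_Suc_shift assms by blast
  have gp: "Gamma (\<delta> + real n) > 0" using assms by auto
  have "x powr (\<delta> + real (Suc n) - 1) = x powr ((\<delta> + real n - 1) + 1)" by (simp add: algebra_simps)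
  also have "\<dots> = x powr (\<delta> + real n - 1) * x" using assms by (simp only: powr_add) simp
  finally have px: "x powr (\<delta> + real (Suc n) - 1) = x powr (\<delta> + real n - 1) * x" .
  have "\<theta> powr (\<delta> + real (Suc n)) = \<theta> powr ((\<delta> + real n) + 1)" by (simp add: algebra_simps)
  also have "\<dots> = \<theta> powr (\<delta> + real n) * \<theta>" using assms by (simp only: powr_add) simp
  finally have pt: "\<theta> powr (\<delta> + real (Suc n)) = \<theta> powr (\<delta> + real n) * \<theta>" .
  have dn: "\<delta> + real n > 0" using assms by auto
  show ?thesis unfolding nct_def g px pt
    using gp dn assms by (simp add: field_simps)
qed

lemma nct_summable:
  assumes "\<delta> > 0" "\<Theta> \<ge> 0" "\<theta> > 0" "x > 0"
  shows "summable (nct \<delta> \<Theta> \<theta> x)"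
proof (rule summable_ratio_test[where c="1/2" and N="nat \<lceil>2 * \<Theta> * x / (\<theta> * \<delta>)\<rceil>"])
  fix n assume n: "nat \<lceil>2 * \<Theta> * x / (\<theta> * \<delta>)\<rceil> \<le> n"
  have nn: "0 \<le> nct \<delta> \<Theta> \<theta> x n" using nct_nonneg assms by blast
  have r0: "0 \<le> \<Theta> * x / (\<theta> * (real n + 1) * (\<delta> + real n))" using assms by auto
  have "2 * \<Theta> * x / (\<theta> * \<delta>) \<le> real n" using n by linarith
  hence h1: "2 * (\<Theta> * x) \<le> \<theta> * (real n * \<delta>)" using assms by (simp add: field_simps)
  have "real n * \<delta> \<le> (real n + 1) * (\<delta> + real n)"
    using assms by (simp add: algebra_simps)
  hence "\<theta> * (real n * \<delta>) \<le> \<theta> * ((real n + 1) * (\<delta> + real n))"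
    using assms by (intro mult_left_mono) auto
  hence "2 * (\<Theta> * x) \<le> \<theta> * (real n + 1) * (\<delta> + real n)" using h1 by (simp add: mult.assoc)
  moreover have "\<theta> * (real n + 1) * (\<delta> + real n) > 0" using assms by auto
  ultimately have "\<Theta> * x / (\<theta> * (real n + 1) * (\<delta> + real n)) \<le> 1/2"
    by (simp add: divide_le_eq)
  then have rle: "\<Theta> * x / (\<theta> * (real n + 1) * (\<delta> + real n)) \<le> 1/2" .
  have "norm (nct \<delta> \<Theta> \<theta> x (Suc n)) = nct \<delta> \<Theta> \<theta> x (Suc n)"
    using nct_nonneg[OF assms(1-3)] by simp
  also have "\<dots> = nct \<delta> \<Theta> \<theta> x n * (\<Theta> * x / (\<theta> * (real n + 1) * (\<delta> + real n)))"
    using nct_Suc[OF assms(1,3,4), of \<Theta> n] by simp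
  also have "\<dots> \<le> nct \<delta> \<Theta> \<theta> x n * (1/2)" by (rule mult_left_mono[OF rle nn])
  finally show "norm (nct \<delta> \<Theta> \<theta> x (Suc n)) \<le> 1/2 * norm (nct \<delta> \<Theta> \<theta> x n)"
    using nn by simp
qed simp

lemma Gamma_scaled_integral:
  assumes a: "a > 0" and b: "b > 0"
  shows "(\<integral>\<^sup>+x. ennreal (indicator {0<..} x * (x powr (a - 1) * exp (- x / b))) \<partial>lborel)
         = ennreal (b powr a * Gamma a)"
proof -
  have I: "((\<lambda>t. t powr (a - 1) / exp t) has_integral Gamma a) {0..}"
    by (rule Gamma_integral_real[OF a])
  have I2: "(\<integral>\<^sup>+x. ennreal (indicator {0..} x * (x powr (a - 1) / exp x)) \<partial>lborel) = ennreal (Gamma a)"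
    using nn_integral_has_integral_lebesgue[OF _ I] by simp
  have "(\<integral>\<^sup>+x. ennreal (indicator {0<..} x * (x powr (a - 1) * exp (- x / b))) \<partial>lborel)
      = ennreal \<bar>b\<bar> * (\<integral>\<^sup>+x. ennreal (indicator {0<..} (0 + b * x) * ((0 + b * x) powr (a - 1) * exp (- (0 + b * x) / b))) \<partial>lborel)"
    by (rule nn_integral_real_affine) (use b in auto)
  also have "(\<lambda>x. ennreal (indicator {0<..} (0 + b * x) * ((0 + b * x) powr (a - 1) * exp (- (0 + b * x) / b))))
     = (\<lambda>x. ennreal (b powr (a - 1)) * ennreal (indicator {0..} x * (x powr (a - 1) / exp x)))"
  proof
    fix x
    show "ennreal (indicator {0<..} (0 + b * x) * ((0 + b * x) powr (a - 1) * exp (- (0 + b * x) / b))) =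
          ennreal (b powr (a - 1)) * ennreal (indicator {0..} x * (x powr (a - 1) / exp x))"
    proof (cases "x > 0")
      case True
      then show ?thesis using b
        by (simp add: powr_mult ennreal_mult[symmetric] exp_minus field_simps zero_less_mult_iff)
    next
      case False
      then show ?thesis using b
        by (cases "x = 0") (auto simp: indicator_def zero_less_mult_iff)
    qed
  qed
  also have "ennreal \<bar>b\<bar> * (\<integral>\<^sup>+x. ennreal (b powr (a - 1)) * ennreal (indicator {0..} x * (x powr (a - 1) / exp x)) \<partial>lborel)
     = ennreal b * (ennreal (b powr (a - 1)) * ennreal (Gamma a))"
    using b by (subst nn_integral_cmult) (simp_all add: I2 del: times_divide_eq_right)
  also have "\<dots> = ennreal (b powr a * Gamma a)"
  proof -
    have "b * b powr (a - 1) = b powr a" using b by (simp add: powr_mult_base)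
    then show ?thesis using b a by (simp add: ennreal_mult[symmetric] mult.assoc[symmetric])
  qed
  finally show ?thesis .
qed

lemma nct_integral:
  assumes "\<delta> > 0" "\<Theta> \<ge> 0" "\<theta> > 0"
  shows "(\<integral>\<^sup>+x. ennreal (indicator {0<..} x * nct \<delta> \<Theta> \<theta> x n) \<partial>lborel) = ennreal (exp (-\<Theta>) * \<Theta> ^ n / fact n)"
proof -
  define C where "C = exp (-\<Theta>) * \<Theta> ^ n / fact n / (\<theta> powr (\<delta> + real n) * Gamma (\<delta> + real n))"
  have Cn: "C \<ge> 0" unfolding C_def using assms by (auto intro!: divide_nonneg_pos mult_pos_pos)
  have pos: "\<theta> powr (\<delta> + real n) * Gamma (\<delta> + real n) > 0" using assms by auto
  have r: "\<And>x. indicator {0<..} x * nct \<delta> \<Theta> \<theta> x n = C * (indicator {0<..} x * (x powr ((\<delta> + real n) - 1) * exp (- x / \<theta>)))"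
    using assms Gamma_real_pos[of "\<delta> + real n"] by (simp add: nct_def C_def field_simps)
  have "(\<lambda>x. ennreal (indicator {0<..} x * nct \<delta> \<Theta> \<theta> x n)) =
        (\<lambda>x. ennreal C * ennreal (indicator {0<..} x * (x powr ((\<delta> + real n) - 1) * exp (- x / \<theta>))))"
    by (rule ext) (simp only: r ennreal_mult'[OF Cn])
  then have "(\<integral>\<^sup>+x. ennreal (indicator {0<..} x * nct \<delta> \<Theta> \<theta> x n) \<partial>lborel)
      = ennreal C * ennreal (\<theta> powr (\<delta> + real n) * Gamma (\<delta> + real n))"
    using Gamma_scaled_integral[of "\<delta> + real n" \<theta>] assms
    by (simp add: nn_integral_cmult)
  also have "\<dots> = ennreal (exp (-\<Theta>) * \<Theta> ^ n / fact n)"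
  proof -
    have dp: "\<delta> + real n > 0" using assms by (simp add: add_pos_nonneg)
    have gp: "Gamma (\<delta> + real n) \<noteq> 0" using Gamma_real_pos[OF dp] by simp
    show ?thesis using pos Cn assms gp by (simp add: ennreal_mult[symmetric] C_def)
  qed
  finally show ?thesis .
qed

lemma ennreal_ncgamma_density:
  assumes "\<delta> > 0" "\<Theta> \<ge> 0" "\<theta> > 0"
  shows "ennreal (ncgamma_density \<delta> \<Theta> \<theta> x) = (\<Sum>n. ennreal (indicator {0<..} x * nct \<delta> \<Theta> \<theta> x n))"
proof (cases "x > 0")
  case True
  then show ?thesis using assms nct_summable[OF assms True] nct_nonneg[OF assms]
    by (simp add: ncgamma_density_nct suminf_ennreal2)
qed (simp add: ncgamma_density_nct)

lemma ncgamma_density_nonneg: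
  assumes "\<delta> > 0" "\<Theta> \<ge> 0" "\<theta> > 0"
  shows "ncgamma_density \<delta> \<Theta> \<theta> x \<ge> 0"
  using assms nct_nonneg[OF assms] by (simp add: ncgamma_density_nct suminf_nonneg nct_summable)

lemma nct_measurable[measurable]:
  "(\<lambda>x. nct \<delta> \<Theta> \<theta> x n) \<in> borel_measurable borel"
  unfolding nct_def by measurable

lemma ncgamma_density_integral:
  assumes "\<delta> > 0" "\<Theta> \<ge> 0" "\<theta> > 0"
  shows "(\<integral>\<^sup>+x. ennreal (ncgamma_density \<delta> \<Theta> \<theta> x) \<partial>lborel) = 1"
proof -
  have "(\<integral>\<^sup>+x. ennreal (ncgamma_density \<delta> \<Theta> \<theta> x) \<partial>lborel)
      = (\<integral>\<^sup>+x. (\<Sum>n. ennreal (indicator {0<..} x * nct \<delta> \<Theta> \<theta> x n)) \<partial>lborel)"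
    using ennreal_ncgamma_density[OF assms] by simp
  also have "\<dots> = (\<Sum>n. \<integral>\<^sup>+x. ennreal (indicator {0<..} x * nct \<delta> \<Theta> \<theta> x n) \<partial>lborel)"
    by (subst nn_integral_suminf) auto
  also have "\<dots> = (\<Sum>n. ennreal (exp (-\<Theta>) * \<Theta> ^ n / fact n))"
    using nct_integral[OF assms] by simp
  also have "\<dots> = ennreal (\<Sum>n. exp (-\<Theta>) * \<Theta> ^ n / fact n)"
  proof (rule suminf_ennreal2)
    show "\<And>n. 0 \<le> exp (-\<Theta>) * \<Theta> ^ n / fact n" using assms by auto
    have "(\<lambda>n. exp (-\<Theta>) * (\<Theta> ^ n /\<^sub>R fact n)) sums (exp (-\<Theta>) * exp \<Theta>)"
      by (rule sums_mult[OF exp_converges])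
    then show "summable (\<lambda>n. exp (-\<Theta>) * \<Theta> ^ n / fact n)"
      by (simp add: sums_summable divide_inverse mult_ac)
  qed
  also have "(\<Sum>n. exp (-\<Theta>) * \<Theta> ^ n / fact n) = exp (-\<Theta>) * exp \<Theta>"
  proof -
    have "(\<lambda>n. exp (-\<Theta>) * (\<Theta> ^ n /\<^sub>R fact n)) sums (exp (-\<Theta>) * exp \<Theta>)"
      by (rule sums_mult[OF exp_converges])
    then show ?thesis by (simp add: sums_unique[symmetric] divide_inverse mult_ac)
  qed
  also have "exp (-\<Theta>) * exp \<Theta> = 1" by (simp add: exp_minus)
  finally show ?thesis by simp
qed

lemma ncgamma_density_measurable2[measurable]:
  "(\<lambda>z. ncgamma_density \<delta> (fst z) \<theta> (snd z)) \<in> borel_measurable (borel \<Otimes>\<^sub>M borel)"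
  unfolding ncgamma_density_nct nct_def by measurable

lemma ncgamma_density_measurable[measurable]:
  "ncgamma_density \<delta> \<Theta> \<theta> \<in> borel_measurable borel"
  unfolding ncgamma_density_nct nct_def by measurable

lemma prob_space_ncgamma:
  assumes "\<delta> > 0" "\<Theta> \<ge> 0" "\<theta> > 0"
  shows "prob_space (ncgamma \<delta> \<Theta> \<theta>)"
  by (rule prob_spaceI)
     (simp add: ncgamma_def emeasure_density ncgamma_density_integral[OF assms] del: ennreal_indicator)

lemma sets_ncgamma[simp, measurable_cong]: "sets (ncgamma \<delta> \<Theta> \<theta>) = sets borel"
  by (simp add: ncgamma_def)

lemma space_ncgamma[simp]: "space (ncgamma \<delta> \<Theta> \<theta>) = UNIV"
  by (simp add: ncgamma_def)

lemma nct_tilt: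
  assumes pos: "1 - \<theta> * Y > 0" and k: "\<kappa> = 1 / (1 - \<theta> * Y)" and th: "\<theta> > 0" and x: "x > 0" and d: "\<delta> > 0"
  shows "exp (Y * x) * nct \<delta> \<Theta> \<theta> x n = \<kappa> powr \<delta> * exp ((\<kappa> - 1) * \<Theta>) * nct \<delta> (\<kappa> * \<Theta>) (\<kappa> * \<theta>) x n"
proof -
  have kp: "\<kappa> > 0" using pos k by simp
  have e1: "exp (- x / (\<kappa> * \<theta>)) = exp (- x / \<theta>) * exp (Y * x)"
  proof -
    have ik: "1 / \<kappa> = 1 - \<theta> * Y" using k pos by simp
    have "- x / (\<kappa> * \<theta>) = - x * (1 / \<kappa>) / \<theta>" by simp
    also have "\<dots> = - x / \<theta> + Y * x" unfolding ik using th by (simp add: field_simps)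
    finally have "- x / (\<kappa> * \<theta>) = - x / \<theta> + Y * x" .
    then show ?thesis by (simp only: exp_add)
  qed
  have e2: "(\<kappa> * \<theta>) powr (\<delta> + real n) = \<kappa> powr \<delta> * \<kappa> ^ n * \<theta> powr (\<delta> + real n)"
    using kp th by (simp add: powr_mult powr_add powr_realpow)
  have e3: "exp (- (\<kappa> * \<Theta>)) = exp (-\<Theta>) * exp (- ((\<kappa> - 1) * \<Theta>))"
    by (simp add: exp_add[symmetric] algebra_simps)
  have g: "Gamma (\<delta> + real n) > 0" using d by auto
  show ?thesis unfolding nct_def e1 e2 e3
    using kp th g x by (simp add: power_mult_distrib field_simps exp_minus mult_exp_exp)
qed

lemma ncgamma_density_tilt:
  assumes pos: "1 - \<theta> * Y > 0" and k: "\<kappa> = 1 / (1 - \<theta> * Y)" and th: "\<theta> > 0"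
    and d: "\<delta> > 0" and T: "\<Theta> \<ge> 0"
  shows "exp (Y * x) * ncgamma_density \<delta> \<Theta> \<theta> x =
         \<kappa> powr \<delta> * exp ((\<kappa> - 1) * \<Theta>) * ncgamma_density \<delta> (\<kappa> * \<Theta>) (\<kappa> * \<theta>) x"
proof (cases "x > 0")
  case True
  have kp: "\<kappa> > 0" using pos k by simp
  have s1: "summable (nct \<delta> \<Theta> \<theta> x)" using nct_summable d T th True by blast
  have s2: "summable (nct \<delta> (\<kappa> * \<Theta>) (\<kappa> * \<theta>) x)" using nct_summable d T th True kp by simp
  have "exp (Y * x) * suminf (nct \<delta> \<Theta> \<theta> x) = (\<Sum>n. exp (Y * x) * nct \<delta> \<Theta> \<theta> x n)"
    by (rule suminf_mult[OF s1, symmetric])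
  also have "\<dots> = (\<Sum>n. \<kappa> powr \<delta> * exp ((\<kappa> - 1) * \<Theta>) * nct \<delta> (\<kappa> * \<Theta>) (\<kappa> * \<theta>) x n)"
    using nct_tilt[OF pos k th True d] by simp
  also have "\<dots> = \<kappa> powr \<delta> * exp ((\<kappa> - 1) * \<Theta>) * suminf (nct \<delta> (\<kappa> * \<Theta>) (\<kappa> * \<theta>) x)"
    by (rule suminf_mult[OF s2])
  finally show ?thesis using True by (simp add: ncgamma_density_nct)
qed (simp add: ncgamma_density_nct)



lemma std_normal_shift:
  "std_normal_density z * exp (- a * z) = exp (a\<^sup>2 / 2) * std_normal_density (z + a)"
proof -
  have "- z\<^sup>2 / 2 + - a * z = a\<^sup>2 / 2 + - (z + a)\<^sup>2 / 2" by (simp add: power2_eq_square field_simps)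
  then have "exp (- z\<^sup>2 / 2) * exp (- a * z) = exp (a\<^sup>2 / 2) * exp (- (z + a)\<^sup>2 / 2)"
    by (simp add: exp_add[symmetric])
  then show ?thesis unfolding std_normal_density_def by (simp add: mult_ac)
qed

lemma gauss_tilt:
  assumes [measurable]: "h \<in> borel_measurable borel"
  shows "(\<integral>\<^sup>+z. ennreal (std_normal_density z) * (ennreal (exp (- a * z)) * h (z + a)) \<partial>lborel)
       = ennreal (exp (a\<^sup>2 / 2)) * (\<integral>\<^sup>+u. ennreal (std_normal_density u) * h u \<partial>lborel)"
proof -
  have "(\<integral>\<^sup>+z. ennreal (std_normal_density z) * (ennreal (exp (- a * z)) * h (z + a)) \<partial>lborel)
      = (\<integral>\<^sup>+z. ennreal (exp (a\<^sup>2 / 2)) * (ennreal (std_normal_density (a + 1 * z)) * h (a + 1 * z)) \<partial>lborel)"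
  proof (rule nn_integral_cong)
    fix z
    have "ennreal (std_normal_density z) * ennreal (exp (- a * z)) = ennreal (exp (a\<^sup>2 / 2)) * ennreal (std_normal_density (z + a))"
      using std_normal_shift[of z a] by (simp add: ennreal_mult[symmetric])
    then show "ennreal (std_normal_density z) * (ennreal (exp (- a * z)) * h (z + a)) =
        ennreal (exp (a\<^sup>2 / 2)) * (ennreal (std_normal_density (a + 1 * z)) * h (a + 1 * z))"
      by (simp add: mult.assoc[symmetric] add.commute)
  qed
  also have "\<dots> = ennreal (exp (a\<^sup>2 / 2)) * (\<integral>\<^sup>+z. ennreal (std_normal_density (a + 1 * z)) * h (a + 1 * z) \<partial>lborel)"
    by (rule nn_integral_cmult) measurable
  also have "(\<integral>\<^sup>+z. ennreal (std_normal_density (a + 1 * z)) * h (a + 1 * z) \<partial>lborel)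
      = (\<integral>\<^sup>+u. ennreal (std_normal_density u) * h u \<partial>lborel)"
    using nn_integral_real_affine[of "\<lambda>u. ennreal (std_normal_density u) * h u" 1 a] by simp
  finally show ?thesis .
qed

lemma std_normal_integral_one:
  "(\<integral>\<^sup>+u. ennreal (std_normal_density u) \<partial>lborel) = 1"
proof -
  have "prob_space (density lborel (\<lambda>x. ennreal (std_normal_density x)))"
    using prob_space_normal_density by simp
  from prob_space.emeasure_space_1[OF this]
  have "emeasure (density lborel (\<lambda>x. ennreal (std_normal_density x))) UNIV = 1" by simp
  then show ?thesis by (subst (asm) emeasure_density) auto
qed

lemma ncg_int_meas:
  assumes [measurable]: "g \<in> borel_measurable borel"
  shows "(\<lambda>\<Theta>. \<integral>\<^sup>+x. ennreal (ncgamma_density \<delta> \<Theta> \<theta> x) * g x \<partial>lborel) \<in> borel_measurable borel"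
proof -
  have "(\<lambda>z. ennreal (ncgamma_density \<delta> (fst z) \<theta> (snd z)) * g (snd z)) \<in> borel_measurable (borel \<Otimes>\<^sub>M borel)"
    by measurable
  then have "(\<lambda>z. ennreal (ncgamma_density \<delta> (fst z) \<theta> (snd z)) * g (snd z)) \<in> borel_measurable (borel \<Otimes>\<^sub>M lborel)"
    using measurable_cong_sets[OF sets_pair_measure_cong[OF refl sets_lborel] refl, of "borel :: real measure" "borel :: ennreal measure"]
    by simp
  then show ?thesis
    using lborel.borel_measurable_nn_integral[of "\<lambda>\<Theta> x. ennreal (ncgamma_density \<delta> \<Theta> \<theta> x) * g x" borel]
    by (simp add: split_beta')
qed

lemma gauss_int_meas:
  assumes [measurable]: "h \<in> borel_measurable (borel \<Otimes>\<^sub>M borel)"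
  shows "(\<lambda>x. \<integral>\<^sup>+z. ennreal (std_normal_density z) * h (x, z) \<partial>lborel) \<in> borel_measurable borel"
proof -
  have "(\<lambda>w. ennreal (std_normal_density (snd w)) * h (fst w, snd w)) \<in> borel_measurable (borel \<Otimes>\<^sub>M borel)"
    by measurable
  then have "(\<lambda>w. ennreal (std_normal_density (snd w)) * h (fst w, snd w)) \<in> borel_measurable (borel \<Otimes>\<^sub>M lborel)"
    using measurable_cong_sets[OF sets_pair_measure_cong[OF refl sets_lborel] refl, of "borel :: real measure" "borel :: ennreal measure"]
    by simp
  then show ?thesis
    using lborel.borel_measurable_nn_integral[of "\<lambda>x z. ennreal (std_normal_density z) * h (x, z)" borel]
    by (simp add: split_beta')
qed



locale lh =
  fixes M Q :: "'a measure"
    and eps RV y :: "int \<Rightarrow> 'a \<Rightarrow> real"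
    and r lam \<delta> \<theta> d \<gamma> \<nu>1 \<nu>2 :: real
    and p q :: nat
    and \<beta> \<alpha> :: "nat \<Rightarrow> real"
  assumes P: "prob_space M"
    and dpos: "\<delta> > 0" and thpos: "\<theta> > 0" and dnn: "d \<ge> 0"
    and bnn: "\<forall>i\<in>{1..p}. \<beta> i \<ge> 0" and ann: "\<forall>j\<in>{1..q}. \<alpha> j \<ge> 0"
    and model: "lharg M (filt M eps RV) eps RV y r lam \<delta> \<theta> d \<gamma> p q \<beta> \<alpha>"
    and Qprob: "prob_space Q" and Qsets: "sets Q = sets M"
    and Qdef: "\<forall>T\<ge>0. \<forall>A\<in>sets (filt M eps RV T).
                 emeasure Q A = (\<integral>\<^sup>+ \<omega>\<in>A. (\<Prod>s\<in>{0..<T}. sdf M (filt M eps RV) RV y \<nu>1 \<nu>2 s \<omega>) \<partial>M)"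
    and no_arb: "\<nu>2 = lam + 1/2"
    and pos: "1 - \<theta> * (- lam\<^sup>2 / 2 - \<nu>1 + 1/8) > 0"
begin


abbreviation "F t \<equiv> filt M eps RV t"

definition "Th t \<omega> = lharg_Theta d \<beta> \<alpha> \<gamma> p q RV eps t \<omega>"

definition "Gen t = (\<Union>X\<in>({eps u | u. u \<le> t} \<union> {RV u | u. u \<le> t}). {X -` B \<inter> space M | B. B \<in> sets borel})"

lemma RVpos: "\<omega> \<in> space M \<Longrightarrow> RV t \<omega> > 0"
  using model unfolding lharg_def by blast

lemma eps_meas[measurable]: "eps t \<in> borel_measurable M"
  using model unfolding lharg_def by blast

lemma RV_meas[measurable]: "RV t \<in> borel_measurable M"
  using model unfolding lharg_def by blast

lemma eps_distr: "t \<ge> 1 \<Longrightarrow> distributed M lborel (eps t) (\<lambda>x. ennreal (std_normal_density x))"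
  using model unfolding lharg_def by blast

lemma eps_indep: "t \<ge> 0 \<Longrightarrow> prob_space.indep_set M
        (sets (sigma (space M) (sets (F t) \<union> {RV (t + 1) -` B \<inter> space M | B. B \<in> sets borel})))
        {eps (t + 1) -` B \<inter> space M | B. B \<in> sets borel}"
  using model unfolding lharg_def by blast

lemma yrel: "\<omega> \<in> space M \<Longrightarrow> y (t + 1) \<omega> = r + lam * RV (t + 1) \<omega> + sqrt (RV (t + 1) \<omega>) * eps (t + 1) \<omega>"
  using model unfolding lharg_def by blast

lemma condlaw: "t \<ge> 0 \<Longrightarrow> has_cond_law M (F t) (RV (t + 1)) (\<lambda>\<omega>. ncgamma \<delta> (Th t \<omega>) \<theta>)"
  using model unfolding lharg_def Th_def by blast

lemma Gen_Pow: "Gen t \<subseteq> Pow (space M)"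
  unfolding Gen_def by auto

lemma Gen_sets: "Gen t \<subseteq> sets M"
  unfolding Gen_def by auto

lemma F_eq: "F t = sigma (space M) (Gen t)"
  unfolding filt_def gen_sigma_def Gen_def ..

lemma space_F[simp]: "space (F t) = space M"
  unfolding F_eq by (simp add: space_measure_of_conv)

lemma sets_F: "sets (F t) = sigma_sets (space M) (Gen t)"
  unfolding F_eq using Gen_Pow by (simp add: sets_measure_of)

lemma F_sub: "sets (F t) \<subseteq> sets M"
  unfolding sets_F using Gen_sets by (rule sets.sigma_sets_subset)

lemma subalg: "subalgebra M (F t)"
  unfolding subalgebra_def using F_sub by simp

lemma Gen_mono: "t \<le> s \<Longrightarrow> Gen t \<subseteq> Gen s"
  unfolding Gen_def by (rule UN_mono) auto

lemma F_mono: "t \<le> s \<Longrightarrow> sets (F t) \<subseteq> sets (F s)"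
  unfolding sets_F by (rule sigma_sets_subseteq[OF Gen_mono])

lemma subalg_F: "t \<le> s \<Longrightarrow> subalgebra (F s) (F t)"
  unfolding subalgebra_def using F_mono by simp

lemma F_meas_mono: "t \<le> s \<Longrightarrow> f \<in> borel_measurable (F t) \<Longrightarrow> f \<in> borel_measurable (F s)"
  using measurable_from_subalg[OF subalg_F] by blast

lemma F_meas_M: "f \<in> borel_measurable (F t) \<Longrightarrow> f \<in> borel_measurable M"
  using measurable_from_subalg[OF subalg] by blast

lemma Gen_meas:
  assumes "X \<in> {eps u | u. u \<le> t} \<union> {RV u | u. u \<le> t}"
  shows "X \<in> borel_measurable (F t)"
proof (rule measurableI)
  fix B :: "real set" assume "B \<in> sets borel"
  then have "X -` B \<inter> space M \<in> Gen t" unfolding Gen_def using assms by blast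
  then show "X -` B \<inter> space (F t) \<in> sets (F t)" unfolding sets_F by auto
qed auto

lemma eps_F: "u \<le> t \<Longrightarrow> eps u \<in> borel_measurable (F t)"
  by (rule Gen_meas) blast

lemma RV_F: "u \<le> t \<Longrightarrow> RV u \<in> borel_measurable (F t)"
  by (rule Gen_meas) blast

lemma Th_F: "Th t \<in> borel_measurable (F t)"
proof -
  have a: "\<And>i. i \<in> {1..p} \<Longrightarrow> (\<lambda>\<omega>. \<beta> i * RV (t + 1 - int i) \<omega>) \<in> borel_measurable (F t)"
    using RV_F by (intro borel_measurable_times borel_measurable_const) auto
  have b: "\<And>j. j \<in> {1..q} \<Longrightarrow> (\<lambda>\<omega>. \<alpha> j * (eps (t + 1 - int j) \<omega> - \<gamma> * sqrt (RV (t + 1 - int j) \<omega>))\<^sup>2) \<in> borel_measurable (F t)"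
  proof -
    fix j assume "j \<in> {1..q}"
    then have "t + 1 - int j \<le> t" by auto
    note [measurable] = eps_F[OF this] RV_F[OF this]
    show "(\<lambda>\<omega>. \<alpha> j * (eps (t + 1 - int j) \<omega> - \<gamma> * sqrt (RV (t + 1 - int j) \<omega>))\<^sup>2) \<in> borel_measurable (F t)"
      by measurable
  qed
  show ?thesis unfolding Th_def[abs_def] lharg_Theta_def
    by (intro borel_measurable_add borel_measurable_const borel_measurable_sum a b)
qed

lemma Th_nonneg: "\<omega> \<in> space M \<Longrightarrow> Th t \<omega> \<ge> 0"
  unfolding Th_def lharg_Theta_def using dnn bnn ann RVpos
  by (intro add_nonneg_nonneg sum_nonneg mult_nonneg_nonneg) (auto intro: less_imp_le)

lemma sfs: "sigma_finite_subalgebra M (F t)"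
  by (rule finite_measure_subalgebra_is_sigma_finite)
     (simp add: finite_measure_subalgebra_def finite_measure_subalgebra_axioms_def subalg prob_space.finite_measure[OF P])


lemma subalgQ: "subalgebra Q (F t)"
  unfolding subalgebra_def using F_sub Qsets sets_eq_imp_space_eq[OF Qsets] by simp

lemma space_Q[simp]: "space Q = space M"
  using sets_eq_imp_space_eq[OF Qsets] .

lemma sfsQ: "sigma_finite_subalgebra Q (F t)"
  by (rule finite_measure_subalgebra_is_sigma_finite)
     (simp add: finite_measure_subalgebra_def finite_measure_subalgebra_axioms_def subalgQ prob_space.finite_measure[OF Qprob])

lemma meas_Q_iff: "f \<in> borel_measurable Q \<longleftrightarrow> f \<in> borel_measurable M"
  using measurable_cong_sets[OF Qsets refl] by blast

lemma ncg_emeasure: "B \<in> sets borel \<Longrightarrow> emeasure (ncgamma \<delta>' \<Theta> \<theta>') B = (\<integral>\<^sup>+x. ennreal (ncgamma_density \<delta>' \<Theta> \<theta>' x) * indicator B x \<partial>lborel)"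
  by (simp add: ncgamma_def emeasure_density)

lemma condlaw_nn:
  assumes t: "t \<ge> 0" and B[measurable]: "B \<in> sets borel"
  shows "AE \<omega> in M. nn_cond_exp M (F t) (\<lambda>\<omega>. indicator B (RV (t + 1) \<omega>)) \<omega> = emeasure (ncgamma \<delta> (Th t \<omega>) \<theta>) B"
proof -
  interpret sigma_finite_subalgebra M "F t" by (rule sfs)
  define f :: "'a \<Rightarrow> real" where "f \<omega> = indicator B (RV (t + 1) \<omega>)" for \<omega>
  define g :: "'a \<Rightarrow> real" where "g \<omega> = measure (ncgamma \<delta> (Th t \<omega>) \<theta>) B" for \<omega>
  have fm[measurable]: "f \<in> borel_measurable M" unfolding f_def by measurable
  have Km: "(\<lambda>\<Theta>. \<integral>\<^sup>+x. ennreal (ncgamma_density \<delta> \<Theta> \<theta> x) * indicator B x \<partial>lborel) \<in> borel_measurable borel"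
    by (rule ncg_int_meas) measurable
  have gmF: "(\<lambda>\<omega>. emeasure (ncgamma \<delta> (Th t \<omega>) \<theta>) B) \<in> borel_measurable (F t)"
    unfolding ncg_emeasure[OF B] by (rule measurable_compose[OF Th_F Km])
  have gm: "g \<in> borel_measurable (F t)"
    unfolding g_def measure_def by (intro borel_measurable_enn2real gmF)
  have gmM[measurable]: "g \<in> borel_measurable M" using F_meas_M[OF gm] .
  have emK: "\<And>\<omega>. \<omega> \<in> space M \<Longrightarrow> emeasure (ncgamma \<delta> (Th t \<omega>) \<theta>) B = ennreal (g \<omega>)"
    unfolding g_def using prob_space_ncgamma[OF dpos Th_nonneg thpos]
    by (simp add: finite_measure.emeasure_eq_measure prob_space.finite_measure)
  have g01: "\<And>\<omega>. \<omega> \<in> space M \<Longrightarrow> 0 \<le> g \<omega> \<and> g \<omega> \<le> 1"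
    unfolding g_def using prob_space_ncgamma[OF dpos Th_nonneg thpos]
    by (simp add: prob_space.prob_le_1)
  have ce: "AE \<omega> in M. real_cond_exp M (F t) f \<omega> = g \<omega>"
    using condlaw[OF t] B unfolding has_cond_law_def f_def g_def by blast
  have intf: "integrable M f"
    by (rule finite_measure.integrable_const_bound[OF prob_space.finite_measure[OF P], where B=1]) (auto simp: f_def)
  have intg: "integrable M g"
    by (rule finite_measure.integrable_const_bound[OF prob_space.finite_measure[OF P], where B=1]) (use g01 in auto)
  have "AE \<omega> in M. (\<lambda>\<omega>. emeasure (ncgamma \<delta> (Th t \<omega>) \<theta>) B) \<omega> = nn_cond_exp M (F t) (\<lambda>\<omega>. indicator B (RV (t + 1) \<omega>)) \<omega>"
    proof (rule nn_cond_exp_charact)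
      fix A assume A: "A \<in> sets (F t)"
      then have AM[measurable]: "A \<in> sets M" using F_sub by blast
      have "(\<integral>x\<in>A. f x \<partial>M) = (\<integral>x\<in>A. real_cond_exp M (F t) f x \<partial>M)"
        by (rule real_cond_exp_intA[OF intf A])
      also have "\<dots> = (\<integral>x\<in>A. g x \<partial>M)"
        unfolding set_lebesgue_integral_def by (rule integral_cong_AE) (use ce in auto)
      finally have eq: "(\<integral>x\<in>A. f x \<partial>M) = (\<integral>x\<in>A. g x \<partial>M)" .
      have "(\<integral>\<^sup>+x\<in>A. indicator B (RV (t + 1) x) \<partial>M) = (\<integral>\<^sup>+x. ennreal (indicator A x * f x) \<partial>M)"
        by (rule nn_integral_cong) (auto simp: f_def indicator_def)
      also have "\<dots> = ennreal (\<integral>x. indicator A x * f x \<partial>M)"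
        using integrable_mult_indicator[OF AM intf] by (intro nn_integral_eq_integral) (simp_all add: f_def)
      also have "(\<integral>x. indicator A x * f x \<partial>M) = (\<integral>x. indicator A x * g x \<partial>M)"
        using eq unfolding set_lebesgue_integral_def by simp
      also have "ennreal (\<integral>x. indicator A x * g x \<partial>M) = (\<integral>\<^sup>+x. ennreal (indicator A x * g x) \<partial>M)"
        using integrable_mult_indicator[OF AM intg] g01 by (intro nn_integral_eq_integral[symmetric]) (auto intro!: AE_I2)
      also have "\<dots> = (\<integral>\<^sup>+x\<in>A. emeasure (ncgamma \<delta> (Th t x) \<theta>) B \<partial>M)"
        by (rule nn_integral_cong) (auto simp: emK indicator_def)
      finally show "(\<integral>\<^sup>+x\<in>A. indicator B (RV (t + 1) x) \<partial>M) = (\<integral>\<^sup>+x\<in>A. emeasure (ncgamma \<delta> (Th t x) \<theta>) B \<partial>M)" .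
    qed (use gmF in simp_all)
  then show ?thesis by (auto elim: AE_mp)
qed

end


definition KP :: "real \<Rightarrow> real \<Rightarrow> real \<Rightarrow> (real \<Rightarrow> ennreal) \<Rightarrow> ennreal" where
  "KP \<delta> \<theta> \<Theta> g = (\<integral>\<^sup>+x. ennreal (ncgamma_density \<delta> \<Theta> \<theta> x) * g x \<partial>lborel)"

lemma KP_meas[measurable]: "g \<in> borel_measurable borel \<Longrightarrow> (\<lambda>\<Theta>. KP \<delta> \<theta> \<Theta> g) \<in> borel_measurable borel"
  unfolding KP_def by (rule ncg_int_meas)

lemma KP_cmult: "g \<in> borel_measurable borel \<Longrightarrow> KP \<delta> \<theta> \<Theta> (\<lambda>x. c * g x) = c * KP \<delta> \<theta> \<Theta> g"
  unfolding KP_def by (subst nn_integral_cmult[symmetric]) (auto simp: mult_ac)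

lemma KP_add: "g \<in> borel_measurable borel \<Longrightarrow> h \<in> borel_measurable borel \<Longrightarrow>
    KP \<delta> \<theta> \<Theta> (\<lambda>x. h x + g x) = KP \<delta> \<theta> \<Theta> h + KP \<delta> \<theta> \<Theta> g"
  unfolding KP_def by (subst nn_integral_add[symmetric]) (auto simp: distrib_left)

lemma KP_SUP:
  assumes [measurable]: "\<And>i. U i \<in> borel_measurable borel" and inc: "incseq U"
  shows "KP \<delta> \<theta> \<Theta> (SUP i. U i) = (SUP i. KP \<delta> \<theta> \<Theta> (U i))"
proof -
  have "KP \<delta> \<theta> \<Theta> (SUP i. U i) = (\<integral>\<^sup>+x. (SUP i. ennreal (ncgamma_density \<delta> \<Theta> \<theta> x) * U i x) \<partial>lborel)"
    unfolding KP_def by (simp add: SUP_mult_left_ennreal image_comp)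
  also have "\<dots> = (SUP i. KP \<delta> \<theta> \<Theta> (U i))"
    unfolding KP_def
  proof (rule nn_integral_monotone_convergence_SUP)
    show "incseq (\<lambda>i x. ennreal (ncgamma_density \<delta> \<Theta> \<theta> x) * U i x)"
      using inc by (auto simp: incseq_def le_fun_def intro: mult_left_mono)
  qed measurable
  finally show ?thesis .
qed

lemma KP_mono: "(\<And>x. g x \<le> h x) \<Longrightarrow> KP \<delta> \<theta> \<Theta> g \<le> KP \<delta> \<theta> \<Theta> h"
  unfolding KP_def by (intro nn_integral_mono mult_left_mono) auto

lemma KP_indicator: "B \<in> sets borel \<Longrightarrow> KP \<delta> \<theta> \<Theta> (indicator B) = emeasure (ncgamma \<delta> \<Theta> \<theta>) B"
  unfolding KP_def by (simp add: ncgamma_def emeasure_density)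

context lh
begin

lemma K_ind:
  assumes t: "t \<ge> 0" and B[measurable]: "B \<in> sets borel" and w: "w \<in> borel_measurable (F t)"
  shows "(\<integral>\<^sup>+\<omega>. w \<omega> * indicator B (RV (t + 1) \<omega>) \<partial>M) = (\<integral>\<^sup>+\<omega>. w \<omega> * emeasure (ncgamma \<delta> (Th t \<omega>) \<theta>) B \<partial>M)"
proof -
  interpret sigma_finite_subalgebra M "F t" by (rule sfs)
  have [measurable]: "w \<in> borel_measurable M" using F_meas_M[OF w] .
  have "(\<integral>\<^sup>+\<omega>. w \<omega> * indicator B (RV (t + 1) \<omega>) \<partial>M) = (\<integral>\<^sup>+\<omega>. w \<omega> * nn_cond_exp M (F t) (\<lambda>\<omega>. indicator B (RV (t + 1) \<omega>)) \<omega> \<partial>M)"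
    by (rule nn_cond_exp_intg[symmetric]) (auto simp: w)
  also have "\<dots> = (\<integral>\<^sup>+\<omega>. w \<omega> * emeasure (ncgamma \<delta> (Th t \<omega>) \<theta>) B \<partial>M)"
    by (rule nn_integral_cong_AE) (use condlaw_nn[OF t B] in auto)
  finally show ?thesis .
qed

lemma K_gen:
  assumes t: "t \<ge> 0" and w: "w \<in> borel_measurable (F t)" and g: "g \<in> borel_measurable borel"
  shows "(\<integral>\<^sup>+\<omega>. w \<omega> * g (RV (t + 1) \<omega>) \<partial>M) = (\<integral>\<^sup>+\<omega>. w \<omega> * KP \<delta> \<theta> (Th t \<omega>) g \<partial>M)"
  using g
proof (induction g rule: borel_measurable_induct)
  case (cong f g)
  then have "f = g" by (auto simp: fun_eq_iff)
  then show ?case using cong by simp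
next
  case (set A)
  then show ?case using K_ind[OF t set w] by (simp add: KP_indicator)
next
  case (mult u c)
  have [measurable]: "w \<in> borel_measurable M" using F_meas_M[OF w] .
  have [measurable]: "u \<in> borel_measurable borel" using mult by simp
  have Thm[measurable]: "Th t \<in> borel_measurable M" using F_meas_M[OF Th_F] .
  have "(\<integral>\<^sup>+\<omega>. w \<omega> * (c * u (RV (t + 1) \<omega>)) \<partial>M) = c * (\<integral>\<^sup>+\<omega>. w \<omega> * u (RV (t + 1) \<omega>) \<partial>M)"
    by (subst nn_integral_cmult[symmetric]) (auto simp: mult_ac)
  also have "\<dots> = c * (\<integral>\<^sup>+\<omega>. w \<omega> * KP \<delta> \<theta> (Th t \<omega>) u \<partial>M)" using mult by simp
  also have "\<dots> = (\<integral>\<^sup>+\<omega>. w \<omega> * KP \<delta> \<theta> (Th t \<omega>) (\<lambda>x. c * u x) \<partial>M)"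
    by (subst nn_integral_cmult[symmetric]) (auto simp: KP_cmult mult_ac)
  finally show ?case .
next
  case (add u v)
  have [measurable]: "w \<in> borel_measurable M" using F_meas_M[OF w] .
  have [measurable]: "u \<in> borel_measurable borel" "v \<in> borel_measurable borel" using add by simp_all
  have Thm[measurable]: "Th t \<in> borel_measurable M" using F_meas_M[OF Th_F] .
  have "(\<integral>\<^sup>+\<omega>. w \<omega> * (v (RV (t + 1) \<omega>) + u (RV (t + 1) \<omega>)) \<partial>M)
      = (\<integral>\<^sup>+\<omega>. w \<omega> * v (RV (t + 1) \<omega>) \<partial>M) + (\<integral>\<^sup>+\<omega>. w \<omega> * u (RV (t + 1) \<omega>) \<partial>M)"
    by (subst nn_integral_add[symmetric]) (auto simp: distrib_left)
  also have "\<dots> = (\<integral>\<^sup>+\<omega>. w \<omega> * KP \<delta> \<theta> (Th t \<omega>) v \<partial>M) + (\<integral>\<^sup>+\<omega>. w \<omega> * KP \<delta> \<theta> (Th t \<omega>) u \<partial>M)"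
    using add by simp
  also have "\<dots> = (\<integral>\<^sup>+\<omega>. w \<omega> * KP \<delta> \<theta> (Th t \<omega>) (\<lambda>x. v x + u x) \<partial>M)"
    by (subst nn_integral_add[symmetric]) (auto simp: KP_add distrib_left)
  finally show ?case .
next
  case (seq U)
  have [measurable]: "w \<in> borel_measurable M" using F_meas_M[OF w] .
  have [measurable]: "\<And>i. U i \<in> borel_measurable borel" using seq by simp
  have Thm[measurable]: "Th t \<in> borel_measurable M" using F_meas_M[OF Th_F] .
  have "(\<integral>\<^sup>+\<omega>. w \<omega> * (SUP i. U i) (RV (t + 1) \<omega>) \<partial>M) = (\<integral>\<^sup>+\<omega>. (SUP i. w \<omega> * U i (RV (t + 1) \<omega>)) \<partial>M)"
    by (simp add: SUP_mult_left_ennreal image_comp)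
  also have "\<dots> = (SUP i. \<integral>\<^sup>+\<omega>. w \<omega> * U i (RV (t + 1) \<omega>) \<partial>M)"
  proof (rule nn_integral_monotone_convergence_SUP)
    show "incseq (\<lambda>i \<omega>. w \<omega> * U i (RV (t + 1) \<omega>))"
      using \<open>incseq U\<close> by (auto simp: incseq_def le_fun_def intro!: mult_left_mono)
  qed measurable
  also have "\<dots> = (SUP i. \<integral>\<^sup>+\<omega>. w \<omega> * KP \<delta> \<theta> (Th t \<omega>) (U i) \<partial>M)" using seq by simp
  also have "\<dots> = (\<integral>\<^sup>+\<omega>. (SUP i. w \<omega> * KP \<delta> \<theta> (Th t \<omega>) (U i)) \<partial>M)"
  proof (rule nn_integral_monotone_convergence_SUP[symmetric])
    show "incseq (\<lambda>i \<omega>. w \<omega> * KP \<delta> \<theta> (Th t \<omega>) (U i))"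
      using \<open>incseq U\<close> by (auto simp: incseq_def le_fun_def intro!: mult_left_mono KP_mono)
  qed measurable
  also have "\<dots> = (\<integral>\<^sup>+\<omega>. w \<omega> * KP \<delta> \<theta> (Th t \<omega>) (SUP i. U i) \<partial>M)"
    using \<open>incseq U\<close> by (simp add: KP_SUP SUP_mult_left_ennreal)
  finally show ?case .
qed

end


definition GI :: "(real \<times> real \<Rightarrow> ennreal) \<Rightarrow> real \<Rightarrow> ennreal" where
  "GI h x = (\<integral>\<^sup>+z. ennreal (std_normal_density z) * h (x, z) \<partial>lborel)"

lemma GI_meas[measurable]: "h \<in> borel_measurable (borel \<Otimes>\<^sub>M borel) \<Longrightarrow> GI h \<in> borel_measurable borel"
  unfolding GI_def[abs_def] by (rule gauss_int_meas)

lemma prob_std_normal: "prob_space (density lborel (\<lambda>x. ennreal (std_normal_density x)))"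
  using prob_space_normal_density by simp

context lh
begin

lemma indep_fubini:
  assumes t: "t \<ge> 0" and w: "w \<in> borel_measurable (F t)" and h[measurable]: "h \<in> borel_measurable (borel \<Otimes>\<^sub>M borel)"
  shows "(\<integral>\<^sup>+\<omega>. w \<omega> * h (RV (t + 1) \<omega>, eps (t + 1) \<omega>) \<partial>M) = (\<integral>\<^sup>+\<omega>. w \<omega> * GI h (RV (t + 1) \<omega>) \<partial>M)"
proof -
  define R where "R = {RV (t + 1) -` B \<inter> space M | B. B \<in> sets borel}"
  define E where "E = {eps (t + 1) -` B \<inter> space M | B. B \<in> sets borel}"
  define G where "G = sigma (space M) (sets (F t) \<union> R)"
  define N where "N = density lborel (\<lambda>x. ennreal (std_normal_density x))"
  have RM: "R \<subseteq> sets M" unfolding R_def by auto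
  have gen_sub: "sets (F t) \<union> R \<subseteq> sets M" using F_sub RM by auto
  have gen_pow: "sets (F t) \<union> R \<subseteq> Pow (space M)" using gen_sub sets.sets_into_space by blast
  have sG: "sets G = sigma_sets (space M) (sets (F t) \<union> R)"
    unfolding G_def using gen_pow by (simp add: sets_measure_of)
  have spG[simp]: "space G = space M" unfolding G_def by (simp add: space_measure_of_conv)
  have GM: "sets G \<subseteq> sets M" unfolding sG using gen_sub by (rule sets.sigma_sets_subset)
  have subG: "subalgebra G (F t)"
    unfolding subalgebra_def sG by (auto intro: sigma_sets.Basic)
  have wG[measurable]: "w \<in> borel_measurable G" using measurable_from_subalg[OF subG w] .
  have RVG[measurable]: "RV (t + 1) \<in> borel_measurable G"
  proof (rule measurableI)
    fix B :: "real set" assume "B \<in> sets borel"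
    then have "RV (t + 1) -` B \<inter> space M \<in> R" unfolding R_def by blast
    then show "RV (t + 1) -` B \<inter> space G \<in> sets G" unfolding sG by (auto intro: sigma_sets.Basic)
  qed auto
  have idG: "(\<lambda>x. x) \<in> measurable M G"
  proof (rule measurableI)
    fix A assume "A \<in> sets G"
    then have "A \<in> sets M" "A \<subseteq> space M" using GM sets.sets_into_space[of A G] by auto
    then show "(\<lambda>x. x) -` A \<inter> space M \<in> sets M" by (simp add: Int_absorb2)
  qed (auto)
  have ind0: "prob_space.indep_set M (sets G) E"
    using eps_indep[OF t] unfolding G_def[symmetric] R_def[symmetric] E_def .
  have Ndistr: "distr M lborel (eps (t + 1)) = N"
    using eps_distr[of "t + 1"] t unfolding distributed_def N_def by simp
  interpret N: prob_space N unfolding N_def by (rule prob_std_normal)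
  interpret MG: prob_space "distr M G (\<lambda>x. x)" by (rule prob_space.prob_space_distr[OF P idG])
  have pXY: "(\<lambda>x. (x, eps (t + 1) x)) \<in> measurable M (G \<Otimes>\<^sub>M lborel)"
    by (auto intro!: measurable_Pair idG)
  have pd: "distr M G (\<lambda>x. x) \<Otimes>\<^sub>M N = distr M (G \<Otimes>\<^sub>M lborel) (\<lambda>x. (x, eps (t + 1) x))"
  proof (rule pair_measure_eqI)
    show "sigma_finite_measure (distr M G (\<lambda>x. x))" by unfold_locales
    show "sigma_finite_measure N" by unfold_locales
    show "sets (distr M G (\<lambda>x. x) \<Otimes>\<^sub>M N) = sets (distr M (G \<Otimes>\<^sub>M lborel) (\<lambda>x. (x, eps (t + 1) x)))"
      by (simp add: N_def cong: sets_pair_measure_cong)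
  next
    fix A B assume A: "A \<in> sets (distr M G (\<lambda>x. x))" and B: "B \<in> sets N"
    then have AG: "A \<in> sets G" and Bb: "B \<in> sets borel" by (simp_all add: N_def)
    have AM: "A \<in> sets M" "A \<subseteq> space M" using AG GM sets.sets_into_space[of A G] by auto
    have BE: "eps (t + 1) -` B \<inter> space M \<in> E" unfolding E_def using Bb by blast
    have BM: "eps (t + 1) -` B \<inter> space M \<in> sets M" using Bb by measurable
    have "emeasure (distr M (G \<Otimes>\<^sub>M lborel) (\<lambda>x. (x, eps (t + 1) x))) (A \<times> B)
        = emeasure M ((\<lambda>x. (x, eps (t + 1) x)) -` (A \<times> B) \<inter> space M)"
      using AG Bb by (intro emeasure_distr[OF pXY]) auto
    also have "(\<lambda>x. (x, eps (t + 1) x)) -` (A \<times> B) \<inter> space M = A \<inter> (eps (t + 1) -` B \<inter> space M)"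
      using AM by auto
    also have "emeasure M (A \<inter> (eps (t + 1) -` B \<inter> space M)) = emeasure M A * emeasure M (eps (t + 1) -` B \<inter> space M)"
      using prob_space.indep_setD[OF P ind0 AG BE] AM BM
      by (simp add: finite_measure.emeasure_eq_measure[OF prob_space.finite_measure[OF P]] ennreal_mult measure_nonneg)
    also have "emeasure M A = emeasure (distr M G (\<lambda>x. x)) A"
      using AG AM by (subst emeasure_distr[OF idG]) (auto simp: Int_absorb2)
    also have "emeasure M (eps (t + 1) -` B \<inter> space M) = emeasure N B"
      unfolding Ndistr[symmetric] using Bb by (subst emeasure_distr) auto
    finally show "emeasure (distr M G (\<lambda>x. x)) A * emeasure N B = emeasure (distr M (G \<Otimes>\<^sub>M lborel) (\<lambda>x. (x, eps (t + 1) x))) (A \<times> B)" ..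
  qed
  define H where "H z = w (fst z) * h (RV (t + 1) (fst z), snd z)" for z
  have Hm[measurable]: "H \<in> borel_measurable (G \<Otimes>\<^sub>M lborel)" unfolding H_def by measurable
  have Hm2: "H \<in> borel_measurable (distr M G (\<lambda>x. x) \<Otimes>\<^sub>M N)"
    using Hm by (simp add: N_def)
  have "(\<integral>\<^sup>+\<omega>. w \<omega> * h (RV (t + 1) \<omega>, eps (t + 1) \<omega>) \<partial>M) = (\<integral>\<^sup>+\<omega>. H (\<omega>, eps (t + 1) \<omega>) \<partial>M)"
    by (simp add: H_def)
  also have "\<dots> = (\<integral>\<^sup>+z. H z \<partial>distr M (G \<Otimes>\<^sub>M lborel) (\<lambda>x. (x, eps (t + 1) x)))"
    by (rule nn_integral_distr[symmetric, OF pXY]) simp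
  also have "\<dots> = (\<integral>\<^sup>+z. H z \<partial>(distr M G (\<lambda>x. x) \<Otimes>\<^sub>M N))" unfolding pd ..
  also have "\<dots> = (\<integral>\<^sup>+\<omega>. \<integral>\<^sup>+z. H (\<omega>, z) \<partial>N \<partial>distr M G (\<lambda>x. x))"
    by (rule N.nn_integral_fst[symmetric, OF Hm2])
  also have "\<dots> = (\<integral>\<^sup>+\<omega>. \<integral>\<^sup>+z. H (\<omega>, z) \<partial>N \<partial>M)"
  proof (rule nn_integral_distr[OF idG])
    show "(\<lambda>\<omega>. \<integral>\<^sup>+z. H (\<omega>, z) \<partial>N) \<in> borel_measurable (distr M G (\<lambda>x. x))"
      using N.borel_measurable_nn_integral_fst[OF Hm2] by simp
  qed
  also have "\<dots> = (\<integral>\<^sup>+\<omega>. w \<omega> * GI h (RV (t + 1) \<omega>) \<partial>M)"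
  proof (rule nn_integral_cong)
    fix \<omega> assume "\<omega> \<in> space M"
    have "(\<integral>\<^sup>+z. H (\<omega>, z) \<partial>N) = (\<integral>\<^sup>+z. ennreal (std_normal_density z) * H (\<omega>, z) \<partial>lborel)"
      unfolding N_def by (rule nn_integral_density) (auto simp: H_def)
    also have "\<dots> = (\<integral>\<^sup>+z. w \<omega> * (ennreal (std_normal_density z) * h (RV (t + 1) \<omega>, z)) \<partial>lborel)"
      by (simp add: H_def mult_ac)
    also have "\<dots> = w \<omega> * GI h (RV (t + 1) \<omega>)"
      unfolding GI_def by (rule nn_integral_cmult) measurable
    finally show "(\<integral>\<^sup>+z. H (\<omega>, z) \<partial>N) = w \<omega> * GI h (RV (t + 1) \<omega>)" .
  qed
  finally show ?thesis .
qed

lemma L1: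
  assumes t: "t \<ge> 0" and w: "w \<in> borel_measurable (F t)" and h[measurable]: "h \<in> borel_measurable (borel \<Otimes>\<^sub>M borel)"
  shows "(\<integral>\<^sup>+\<omega>. w \<omega> * h (RV (t + 1) \<omega>, eps (t + 1) \<omega>) \<partial>M) = (\<integral>\<^sup>+\<omega>. w \<omega> * KP \<delta> \<theta> (Th t \<omega>) (GI h) \<partial>M)"
  using indep_fubini[OF t w h] K_gen[OF t w GI_meas[OF h]] by simp

end


lemma KP_one:
  assumes "\<delta> > 0" "\<Theta> \<ge> 0" "\<theta> > 0"
  shows "KP \<delta> \<theta> \<Theta> (\<lambda>_. 1) = 1"
  unfolding KP_def using ncgamma_density_integral[OF assms] by simp

lemma GI_one: "GI (\<lambda>_. 1) x = 1"
  unfolding GI_def using std_normal_integral_one by simp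

context lh
begin

definition "Yst = - lam\<^sup>2 / 2 - \<nu>1 + 1/8"
definition "kap = 1 / (1 - \<theta> * Yst)"
definition "cc \<Theta> = ennreal (exp (- \<nu>2 * r) * kap powr \<delta> * exp ((kap - 1) * \<Theta>))"
definition "H0 z = ennreal (exp (- \<nu>1 * fst z - \<nu>2 * (r + lam * fst z + sqrt (fst z) * snd z)))"

lemma pos': "1 - \<theta> * Yst > 0" using pos unfolding Yst_def .

lemma kap_pos: "kap > 0" unfolding kap_def using pos' by simp

lemma H0_meas[measurable]: "H0 \<in> borel_measurable (borel \<Otimes>\<^sub>M borel)"
  unfolding H0_def[abs_def] by measurable

lemma cc_meas[measurable]: "cc \<in> borel_measurable borel"
  unfolding cc_def[abs_def] by measurable

lemma cc_pos: "cc \<Theta> > 0" "cc \<Theta> < top"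
  unfolding cc_def using kap_pos by auto

lemma kernel_tilt:
  assumes T: "\<Theta> \<ge> 0" and h[measurable]: "h \<in> borel_measurable (borel \<Otimes>\<^sub>M borel)"
  shows "KP \<delta> \<theta> \<Theta> (GI (\<lambda>z. H0 z * h (fst z, snd z + \<nu>2 * sqrt (fst z))))
       = cc \<Theta> * KP \<delta> (kap * \<theta>) (kap * \<Theta>) (GI h)"
proof -
  have pt: "ennreal (ncgamma_density \<delta> \<Theta> \<theta> x) * GI (\<lambda>z. H0 z * h (fst z, snd z + \<nu>2 * sqrt (fst z))) x
        = cc \<Theta> * (ennreal (ncgamma_density \<delta> (kap * \<Theta>) (kap * \<theta>) x) * GI h x)" for x
  proof (cases "x > 0")
    case False
    then show ?thesis by (simp add: ncgamma_density_nct)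
  next
    case True
    define a where "a = \<nu>2 * sqrt x"
    define c0 where "c0 = exp (- \<nu>1 * x - \<nu>2 * r - \<nu>2 * lam * x)"
    have H0x: "H0 (x, z) = ennreal c0 * ennreal (exp (- a * z))" for z
      unfolding H0_def c0_def a_def by (simp add: ennreal_mult[symmetric] exp_add[symmetric] algebra_simps)
    have hx[measurable]: "(\<lambda>u. h (x, u)) \<in> borel_measurable borel" by measurable
    have "GI (\<lambda>z. H0 z * h (fst z, snd z + \<nu>2 * sqrt (fst z))) x
        = (\<integral>\<^sup>+z. ennreal c0 * (ennreal (std_normal_density z) * (ennreal (exp (- a * z)) * h (x, z + a))) \<partial>lborel)"
      unfolding GI_def by (intro nn_integral_cong) (simp add: H0x a_def mult_ac)
    also have "\<dots> = ennreal c0 * (\<integral>\<^sup>+z. ennreal (std_normal_density z) * (ennreal (exp (- a * z)) * h (x, z + a)) \<partial>lborel)"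
      by (rule nn_integral_cmult) measurable
    also have "\<dots> = ennreal c0 * (ennreal (exp (a\<^sup>2 / 2)) * GI h x)"
      using gauss_tilt[OF hx, of a] by (simp add: GI_def)
    also have "ennreal c0 * (ennreal (exp (a\<^sup>2 / 2)) * GI h x) = ennreal (exp (- \<nu>2 * r) * exp (Yst * x)) * GI h x"
    proof -
      have "a\<^sup>2 = \<nu>2\<^sup>2 * x" unfolding a_def using True by (simp add: power_mult_distrib)
      then have "c0 * exp (a\<^sup>2 / 2) = exp (- \<nu>2 * r) * exp (Yst * x)"
        unfolding c0_def Yst_def no_arb by (simp add: exp_add[symmetric] power2_eq_square algebra_simps)
      moreover have "0 \<le> c0" unfolding c0_def by simp
      ultimately show ?thesis by (simp add: ennreal_mult[symmetric] mult.assoc[symmetric])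
    qed
    finally have G: "GI (\<lambda>z. H0 z * h (fst z, snd z + \<nu>2 * sqrt (fst z))) x = ennreal (exp (- \<nu>2 * r) * exp (Yst * x)) * GI h x" .
    have tilt: "exp (Yst * x) * ncgamma_density \<delta> \<Theta> \<theta> x = kap powr \<delta> * exp ((kap - 1) * \<Theta>) * ncgamma_density \<delta> (kap * \<Theta>) (kap * \<theta>) x"
      by (rule ncgamma_density_tilt[OF pos' kap_def thpos dpos T])
    have dn: "ncgamma_density \<delta> \<Theta> \<theta> x \<ge> 0" by (rule ncgamma_density_nonneg[OF dpos T thpos])
    have dn2: "ncgamma_density \<delta> (kap * \<Theta>) (kap * \<theta>) x \<ge> 0"
      by (rule ncgamma_density_nonneg) (use dpos T thpos kap_pos in auto)
    have "ennreal (ncgamma_density \<delta> \<Theta> \<theta> x) * ennreal (exp (- \<nu>2 * r) * exp (Yst * x))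
        = ennreal (exp (- \<nu>2 * r) * (exp (Yst * x) * ncgamma_density \<delta> \<Theta> \<theta> x))"
      using dn by (simp add: ennreal_mult[symmetric] mult_ac)
    also have "\<dots> = cc \<Theta> * ennreal (ncgamma_density \<delta> (kap * \<Theta>) (kap * \<theta>) x)"
      unfolding tilt cc_def using dn2 kap_pos by (simp add: ennreal_mult[symmetric] mult_ac)
    finally show ?thesis unfolding G by (simp add: mult.assoc[symmetric])
  qed
  show ?thesis unfolding KP_def pt
    by (rule nn_integral_cmult) measurable
qed

lemma kernel_norm:
  assumes T: "\<Theta> \<ge> 0"
  shows "KP \<delta> \<theta> \<Theta> (GI H0) = cc \<Theta>"
proof -
  have "KP \<delta> \<theta> \<Theta> (GI H0) = KP \<delta> \<theta> \<Theta> (GI (\<lambda>z. H0 z * (\<lambda>_. 1::ennreal) (fst z, snd z + \<nu>2 * sqrt (fst z))))"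
    by simp
  also have "\<dots> = cc \<Theta> * KP \<delta> (kap * \<theta>) (kap * \<Theta>) (GI (\<lambda>_. 1))"
    by (rule kernel_tilt[OF T]) simp
  also have "KP \<delta> (kap * \<theta>) (kap * \<Theta>) (GI (\<lambda>_. 1)) = 1"
    unfolding GI_one using KP_one[of \<delta> "kap * \<Theta>" "kap * \<theta>"] dpos T thpos kap_pos by simp
  finally show ?thesis by simp
qed

definition "Enum s \<omega> = ennreal (exp (- \<nu>1 * RV (s + 1) \<omega> - \<nu>2 * y (s + 1) \<omega>))"

lemma Enum_H0: "\<omega> \<in> space M \<Longrightarrow> Enum s \<omega> = H0 (RV (s + 1) \<omega>, eps (s + 1) \<omega>)"
  unfolding Enum_def H0_def using yrel by simp

lemma Enum_F: "Enum s \<in> borel_measurable (F (s + 1))"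
proof -
  note [measurable] = RV_F[of "s + 1" "s + 1"] eps_F[of "s + 1" "s + 1"]
  have "(\<lambda>\<omega>. H0 (RV (s + 1) \<omega>, eps (s + 1) \<omega>)) \<in> borel_measurable (F (s + 1))" by measurable
  then show ?thesis using measurable_cong[of "F (s + 1)" "Enum s" "\<lambda>\<omega>. H0 (RV (s + 1) \<omega>, eps (s + 1) \<omega>)"] Enum_H0
    by simp
qed

lemma sdfC:
  assumes t: "t \<ge> 0"
  shows "AE \<omega> in M. nn_cond_exp M (F t) (Enum t) \<omega> = cc (Th t \<omega>)"
proof -
  interpret sigma_finite_subalgebra M "F t" by (rule sfs)
  have [measurable]: "Enum t \<in> borel_measurable M" using F_meas_M[OF Enum_F] .
  have ccF: "(\<lambda>\<omega>. cc (Th t \<omega>)) \<in> borel_measurable (F t)"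
    by (rule measurable_compose[OF Th_F cc_meas])
  have "AE \<omega> in M. cc (Th t \<omega>) = nn_cond_exp M (F t) (Enum t) \<omega>"
  proof (rule nn_cond_exp_charact)
    fix A assume A: "A \<in> sets (F t)"
    have wA: "indicator A \<in> borel_measurable (F t)" using A by simp
    have "(\<integral>\<^sup>+x\<in>A. Enum t x \<partial>M) = (\<integral>\<^sup>+x. indicator A x * H0 (RV (t + 1) x, eps (t + 1) x) \<partial>M)"
      by (rule nn_integral_cong) (simp add: Enum_H0 mult.commute)
    also have "\<dots> = (\<integral>\<^sup>+x. indicator A x * KP \<delta> \<theta> (Th t x) (GI H0) \<partial>M)"
      by (rule L1[OF t wA H0_meas])
    also have "\<dots> = (\<integral>\<^sup>+x\<in>A. cc (Th t x) \<partial>M)"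
      by (rule nn_integral_cong) (simp add: kernel_norm Th_nonneg mult.commute)
    finally show "(\<integral>\<^sup>+x\<in>A. Enum t x \<partial>M) = (\<integral>\<^sup>+x\<in>A. cc (Th t x) \<partial>M)" .
  qed (use ccF in simp_all)
  then show ?thesis by (auto elim: AE_mp)
qed

definition "D T \<omega> = (\<Prod>s\<in>{0..<T}. sdf M (filt M eps RV) RV y \<nu>1 \<nu>2 s \<omega>)"

lemma sdf_eq: "sdf M (filt M eps RV) RV y \<nu>1 \<nu>2 s \<omega> = Enum s \<omega> / nn_cond_exp M (F s) (Enum s) \<omega>"
  unfolding sdf_def Enum_def[abs_def] ..

lemma sdf_F: "s + 1 \<le> T \<Longrightarrow> (\<lambda>\<omega>. sdf M (filt M eps RV) RV y \<nu>1 \<nu>2 s \<omega>) \<in> borel_measurable (F T)"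
  unfolding sdf_eq
  apply (intro borel_measurable_divide_ennreal)
   apply (rule F_meas_mono[OF _ Enum_F], simp)
  apply (rule F_meas_mono[of s], simp)
  apply (rule borel_measurable_nn_cond_exp)
  done

lemma D_F: "D T \<in> borel_measurable (F T)"
  unfolding D_def[abs_def]
  by (rule borel_measurable_prod_ennreal) (rule sdf_F, auto)

lemma Q_int:
  assumes T: "T \<ge> 0" and f[measurable]: "f \<in> borel_measurable (F T)"
  shows "(\<integral>\<^sup>+\<omega>. f \<omega> \<partial>Q) = (\<integral>\<^sup>+\<omega>. D T \<omega> * f \<omega> \<partial>M)"
proof -
  have DF[measurable]: "D T \<in> borel_measurable (F T)" by (rule D_F)
  have eq: "restr_to_subalg Q (F T) = density (restr_to_subalg M (F T)) (D T)"
  proof (rule measure_eqI)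
    show "sets (restr_to_subalg Q (F T)) = sets (density (restr_to_subalg M (F T)) (D T))"
      by (simp add: sets_restr_to_subalg subalgQ subalg)
  next
    fix A assume "A \<in> sets (restr_to_subalg Q (F T))"
    then have A[measurable]: "A \<in> sets (F T)" by (simp add: sets_restr_to_subalg subalgQ)
    have "emeasure (restr_to_subalg Q (F T)) A = emeasure Q A"
      by (rule emeasure_restr_to_subalg[OF subalgQ A])
    also have "\<dots> = (\<integral>\<^sup>+\<omega>\<in>A. D T \<omega> \<partial>M)" using Qdef T A unfolding D_def by blast
    also have "\<dots> = (\<integral>\<^sup>+\<omega>. D T \<omega> * indicator A \<omega> \<partial>restr_to_subalg M (F T))"
      by (rule nn_integral_subalgebra2[OF subalg, symmetric]) measurable
    also have "\<dots> = emeasure (density (restr_to_subalg M (F T)) (D T)) A"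
      by (rule emeasure_density[symmetric]) (simp_all add: sets_restr_to_subalg subalg measurable_restrict measurable_in_subalg[OF subalg DF])
    finally show "emeasure (restr_to_subalg Q (F T)) A = emeasure (density (restr_to_subalg M (F T)) (D T)) A" .
  qed
  have "(\<integral>\<^sup>+\<omega>. f \<omega> \<partial>Q) = (\<integral>\<^sup>+\<omega>. f \<omega> \<partial>restr_to_subalg Q (F T))"
    by (rule nn_integral_subalgebra2[OF subalgQ, symmetric]) measurable
  also have "\<dots> = (\<integral>\<^sup>+\<omega>. D T \<omega> * f \<omega> \<partial>restr_to_subalg M (F T))"
    unfolding eq by (rule nn_integral_density) (simp_all add: measurable_in_subalg[OF subalg])
  also have "\<dots> = (\<integral>\<^sup>+\<omega>. D T \<omega> * f \<omega> \<partial>M)"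
    by (rule nn_integral_subalgebra2[OF subalg]) measurable
  finally show ?thesis .
qed

end


context lh
begin

definition "epsQ t \<omega> = eps t \<omega> + \<nu>2 * sqrt (RV t \<omega>)"

lemma cc_inv: "inverse (cc \<Theta>) * cc \<Theta> = 1"
proof -
  define c where "c = exp (- \<nu>2 * r) * kap powr \<delta> * exp ((kap - 1) * \<Theta>)"
  have p: "c > 0" unfolding c_def using kap_pos by simp
  have "inverse (ennreal c) * ennreal c = ennreal (inverse c) * ennreal c" using p by (simp add: inverse_ennreal)
  also have "\<dots> = ennreal (inverse c * c)" using p by (simp add: ennreal_mult[symmetric])
  also have "\<dots> = 1" using p by simp
  finally show ?thesis unfolding cc_def c_def .
qed

lemma D_Suc: "t \<ge> 0 \<Longrightarrow> D (t + 1) \<omega> = D t \<omega> * sdf M (filt M eps RV) RV y \<nu>1 \<nu>2 t \<omega>"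
proof -
  assume t: "t \<ge> 0"
  have "{0..<t + 1} = insert t {0..<t}" using t by auto
  then show ?thesis unfolding D_def by (simp add: mult.commute)
qed

lemma KPs_meas: "g \<in> borel_measurable borel \<Longrightarrow> (\<lambda>\<omega>. KP \<delta> (kap * \<theta>) (kap * Th t \<omega>) g) \<in> borel_measurable (F t)"
proof -
  assume g: "g \<in> borel_measurable borel"
  have "(\<lambda>\<omega>. kap * Th t \<omega>) \<in> borel_measurable (F t)"
    using Th_F by (intro borel_measurable_times borel_measurable_const)
  then show ?thesis by (rule measurable_compose[OF _ KP_meas[OF g]])
qed

lemma QL1:
  assumes t: "t \<ge> 0" and w: "w \<in> borel_measurable (F t)" and h[measurable]: "h \<in> borel_measurable (borel \<Otimes>\<^sub>M borel)"
  shows "(\<integral>\<^sup>+\<omega>. w \<omega> * h (RV (t + 1) \<omega>, epsQ (t + 1) \<omega>) \<partial>Q) = (\<integral>\<^sup>+\<omega>. w \<omega> * KP \<delta> (kap * \<theta>) (kap * Th t \<omega>) (GI h) \<partial>Q)"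
proof -
  have t1: "t + 1 \<ge> 0" using t by simp
  have w1[measurable]: "w \<in> borel_measurable (F (t + 1))" using F_meas_mono[OF _ w] by simp
  note [measurable] = RV_F[of "t + 1" "t + 1"] eps_F[of "t + 1" "t + 1"]
  have f1: "(\<lambda>\<omega>. w \<omega> * h (RV (t + 1) \<omega>, epsQ (t + 1) \<omega>)) \<in> borel_measurable (F (t + 1))"
    unfolding epsQ_def by measurable
  define W where "W \<omega> = D t \<omega> * w \<omega> * inverse (cc (Th t \<omega>))" for \<omega>
  have ccF: "(\<lambda>\<omega>. cc (Th t \<omega>)) \<in> borel_measurable (F t)"
    by (rule measurable_compose[OF Th_F cc_meas])
  have WF: "W \<in> borel_measurable (F t)"
    unfolding W_def using D_F w ccF by (intro borel_measurable_times_ennreal borel_measurable_inverse) auto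
  define H2 where "H2 z = H0 z * h (fst z, snd z + \<nu>2 * sqrt (fst z))" for z
  have H2m[measurable]: "H2 \<in> borel_measurable (borel \<Otimes>\<^sub>M borel)" unfolding H2_def[abs_def] by measurable
  have "(\<integral>\<^sup>+\<omega>. w \<omega> * h (RV (t + 1) \<omega>, epsQ (t + 1) \<omega>) \<partial>Q)
      = (\<integral>\<^sup>+\<omega>. D (t + 1) \<omega> * (w \<omega> * h (RV (t + 1) \<omega>, epsQ (t + 1) \<omega>)) \<partial>M)"
    by (rule Q_int[OF t1 f1])
  also have "\<dots> = (\<integral>\<^sup>+\<omega>. W \<omega> * H2 (RV (t + 1) \<omega>, eps (t + 1) \<omega>) \<partial>M)"
  proof (rule nn_integral_cong_AE)
    show "AE \<omega> in M. D (t + 1) \<omega> * (w \<omega> * h (RV (t + 1) \<omega>, epsQ (t + 1) \<omega>)) = W \<omega> * H2 (RV (t + 1) \<omega>, eps (t + 1) \<omega>)"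
      using sdfC[OF t]
    proof (rule AE_mp)
      show "AE \<omega> in M. nn_cond_exp M (F t) (Enum t) \<omega> = cc (Th t \<omega>) \<longrightarrow>
          D (t + 1) \<omega> * (w \<omega> * h (RV (t + 1) \<omega>, epsQ (t + 1) \<omega>)) = W \<omega> * H2 (RV (t + 1) \<omega>, eps (t + 1) \<omega>)"
      proof (rule AE_I2, rule impI)
        fix \<omega> assume \<omega>: "\<omega> \<in> space M" and c: "nn_cond_exp M (F t) (Enum t) \<omega> = cc (Th t \<omega>)"
        have "D (t + 1) \<omega> = D t \<omega> * (Enum t \<omega> * inverse (cc (Th t \<omega>)))"
          using D_Suc[OF t] c by (simp add: sdf_eq divide_ennreal_def)
        then show "D (t + 1) \<omega> * (w \<omega> * h (RV (t + 1) \<omega>, epsQ (t + 1) \<omega>)) = W \<omega> * H2 (RV (t + 1) \<omega>, eps (t + 1) \<omega>)"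
          unfolding W_def H2_def epsQ_def using Enum_H0[OF \<omega>, of t] by (simp add: mult_ac)
      qed
    qed
  qed
  also have "\<dots> = (\<integral>\<^sup>+\<omega>. W \<omega> * KP \<delta> \<theta> (Th t \<omega>) (GI H2) \<partial>M)"
    by (rule L1[OF t WF H2m])
  also have "\<dots> = (\<integral>\<^sup>+\<omega>. D t \<omega> * (w \<omega> * KP \<delta> (kap * \<theta>) (kap * Th t \<omega>) (GI h)) \<partial>M)"
  proof (rule nn_integral_cong)
    fix \<omega> assume \<omega>: "\<omega> \<in> space M"
    have "KP \<delta> \<theta> (Th t \<omega>) (GI H2) = cc (Th t \<omega>) * KP \<delta> (kap * \<theta>) (kap * Th t \<omega>) (GI h)"
      unfolding H2_def by (rule kernel_tilt[OF Th_nonneg[OF \<omega>] h])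
    then have "W \<omega> * KP \<delta> \<theta> (Th t \<omega>) (GI H2) = D t \<omega> * w \<omega> * (inverse (cc (Th t \<omega>)) * cc (Th t \<omega>)) * KP \<delta> (kap * \<theta>) (kap * Th t \<omega>) (GI h)"
      unfolding W_def by (simp add: mult_ac)
    also have "\<dots> = D t \<omega> * (w \<omega> * KP \<delta> (kap * \<theta>) (kap * Th t \<omega>) (GI h))"
      unfolding cc_inv by (simp add: mult_ac)
    finally show "W \<omega> * KP \<delta> \<theta> (Th t \<omega>) (GI H2) = D t \<omega> * (w \<omega> * KP \<delta> (kap * \<theta>) (kap * Th t \<omega>) (GI h))" .
  qed
  also have "\<dots> = (\<integral>\<^sup>+\<omega>. w \<omega> * KP \<delta> (kap * \<theta>) (kap * Th t \<omega>) (GI h) \<partial>Q)"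
    by (rule Q_int[OF t, symmetric]) (intro borel_measurable_times_ennreal w KPs_meas GI_meas h)
  finally show ?thesis .
qed

end


context lh
begin

abbreviation "NN \<equiv> density lborel (\<lambda>x. ennreal (std_normal_density x))"

lemma emQ: "emeasure Q S = ennreal (measure Q S)"
  by (rule finite_measure.emeasure_eq_measure[OF prob_space.finite_measure[OF Qprob]])

lemma emN: "emeasure NN S = ennreal (measure NN S)"
  by (rule finite_measure.emeasure_eq_measure[OF prob_space.finite_measure[OF prob_std_normal]])

lemma epsQ_F: "u \<le> t \<Longrightarrow> epsQ u \<in> borel_measurable (F t)"
proof -
  assume u: "u \<le> t"
  note [measurable] = eps_F[OF u] RV_F[OF u]
  show ?thesis unfolding epsQ_def[abs_def] by measurable
qed

lemma epsQ_M[measurable]: "epsQ u \<in> borel_measurable M"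
  using F_meas_M[OF epsQ_F[of u u]] by simp

lemma Ks_meas: "C \<in> sets borel \<Longrightarrow> (\<lambda>\<omega>. emeasure (ncgamma \<delta> (kap * Th t \<omega>) (kap * \<theta>)) C) \<in> borel_measurable (F t)"
  using KPs_meas[of "indicator C" t] by (simp add: KP_indicator)

lemma Ks_prob: "\<omega> \<in> space M \<Longrightarrow> prob_space (ncgamma \<delta> (kap * Th t \<omega>) (kap * \<theta>))"
  by (rule prob_space_ncgamma) (use dpos thpos kap_pos Th_nonneg in auto)

lemma GI_ind: "C \<in> sets borel \<Longrightarrow> B \<in> sets borel \<Longrightarrow>
   GI (\<lambda>z. indicator C (fst z) * indicator B (snd z)) x = emeasure NN B * indicator C x"
proof -
  assume C: "C \<in> sets borel" and B[measurable]: "B \<in> sets borel"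
  have "GI (\<lambda>z. indicator C (fst z) * indicator B (snd z)) x
      = (\<integral>\<^sup>+z. indicator C x * (ennreal (std_normal_density z) * indicator B z) \<partial>lborel)"
    unfolding GI_def by (simp add: mult_ac)
  also have "\<dots> = indicator C x * (\<integral>\<^sup>+z. ennreal (std_normal_density z) * indicator B z \<partial>lborel)"
    by (rule nn_integral_cmult) measurable
  also have "(\<integral>\<^sup>+z. ennreal (std_normal_density z) * indicator B z \<partial>lborel) = emeasure NN B"
    by (simp add: emeasure_density)
  finally show ?thesis by (simp add: mult.commute)
qed

lemma Qkey:
  assumes t: "t \<ge> 0" and X: "X \<in> sets (F t)" and C[measurable]: "C \<in> sets borel" and B[measurable]: "B \<in> sets borel"
  shows "emeasure Q (X \<inter> {\<omega>\<in>space M. RV (t + 1) \<omega> \<in> C \<and> epsQ (t + 1) \<omega> \<in> B})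
       = emeasure NN B * (\<integral>\<^sup>+\<omega>. indicator X \<omega> * emeasure (ncgamma \<delta> (kap * Th t \<omega>) (kap * \<theta>)) C \<partial>Q)"
proof -
  have XM[measurable]: "X \<in> sets M" using X F_sub by blast
  define h where "h z = indicator C (fst z) * (indicator B (snd z) :: ennreal)" for z
  have hm[measurable]: "h \<in> borel_measurable (borel \<Otimes>\<^sub>M borel)" unfolding h_def[abs_def] by measurable
  have S: "X \<inter> {\<omega>\<in>space M. RV (t + 1) \<omega> \<in> C \<and> epsQ (t + 1) \<omega> \<in> B} \<in> sets Q"
    unfolding Qsets by measurable
  have wX: "indicator X \<in> borel_measurable (F t)" using X by simp
  have KsM: "(\<lambda>\<omega>. emeasure (ncgamma \<delta> (kap * Th t \<omega>) (kap * \<theta>)) C) \<in> borel_measurable Q"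
    unfolding meas_Q_iff by (rule F_meas_M[OF Ks_meas[OF C]])
  have "emeasure Q (X \<inter> {\<omega>\<in>space M. RV (t + 1) \<omega> \<in> C \<and> epsQ (t + 1) \<omega> \<in> B})
      = (\<integral>\<^sup>+\<omega>. indicator (X \<inter> {\<omega>\<in>space M. RV (t + 1) \<omega> \<in> C \<and> epsQ (t + 1) \<omega> \<in> B}) \<omega> \<partial>Q)"
    using S by simp
  also have "\<dots> = (\<integral>\<^sup>+\<omega>. indicator X \<omega> * h (RV (t + 1) \<omega>, epsQ (t + 1) \<omega>) \<partial>Q)"
    by (rule nn_integral_cong) (auto simp: h_def indicator_def)
  also have "\<dots> = (\<integral>\<^sup>+\<omega>. indicator X \<omega> * KP \<delta> (kap * \<theta>) (kap * Th t \<omega>) (GI h) \<partial>Q)"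
    by (rule QL1[OF t wX hm])
  also have "\<dots> = (\<integral>\<^sup>+\<omega>. emeasure NN B * (indicator X \<omega> * emeasure (ncgamma \<delta> (kap * Th t \<omega>) (kap * \<theta>)) C) \<partial>Q)"
  proof (rule nn_integral_cong)
    fix \<omega>
    have "GI h = (\<lambda>x. emeasure NN B * indicator C x)"
      unfolding h_def by (rule ext, rule GI_ind[OF C B])
    then have "KP \<delta> (kap * \<theta>) (kap * Th t \<omega>) (GI h) = emeasure NN B * emeasure (ncgamma \<delta> (kap * Th t \<omega>) (kap * \<theta>)) C"
      by (simp add: KP_cmult KP_indicator)
    then show "indicator X \<omega> * KP \<delta> (kap * \<theta>) (kap * Th t \<omega>) (GI h) = emeasure NN B * (indicator X \<omega> * emeasure (ncgamma \<delta> (kap * Th t \<omega>) (kap * \<theta>)) C)"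
      by (simp add: mult_ac)
  qed
  also have "\<dots> = emeasure NN B * (\<integral>\<^sup>+\<omega>. indicator X \<omega> * emeasure (ncgamma \<delta> (kap * Th t \<omega>) (kap * \<theta>)) C \<partial>Q)"
  proof (rule nn_integral_cmult)
    have XQ: "X \<in> sets Q" using XM Qsets by simp
    show "(\<lambda>\<omega>. indicator X \<omega> * emeasure (ncgamma \<delta> (kap * Th t \<omega>) (kap * \<theta>)) C) \<in> borel_measurable Q"
      by (rule borel_measurable_times_ennreal[OF _ KsM]) (use XQ in simp)
  qed
  finally show ?thesis .
qed

lemma Qkey_UNIV:
  assumes t: "t \<ge> 0" and X: "X \<in> sets (F t)"
  shows "(\<integral>\<^sup>+\<omega>. indicator X \<omega> * emeasure (ncgamma \<delta> (kap * Th t \<omega>) (kap * \<theta>)) UNIV \<partial>Q) = emeasure Q X"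
proof -
  have XQ: "X \<in> sets Q" using X F_sub Qsets by blast
  have "(\<integral>\<^sup>+\<omega>. indicator X \<omega> * emeasure (ncgamma \<delta> (kap * Th t \<omega>) (kap * \<theta>)) UNIV \<partial>Q) = (\<integral>\<^sup>+\<omega>. indicator X \<omega> \<partial>Q)"
    by (rule nn_integral_cong) (simp add: prob_space.emeasure_space_1[OF Ks_prob, simplified])
  also have "\<dots> = emeasure Q X" using XQ by simp
  finally show ?thesis .
qed

lemma Q_indep_step:
  assumes t: "t \<ge> 0" and X: "X \<in> sets (F t)" and B[measurable]: "B \<in> sets borel"
  shows "emeasure Q (X \<inter> (epsQ (t + 1) -` B \<inter> space M)) = emeasure Q X * emeasure NN B"
proof -
  have XM: "X \<subseteq> space M" using X F_sub sets.sets_into_space by blast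
  have "X \<inter> (epsQ (t + 1) -` B \<inter> space M) = X \<inter> {\<omega>\<in>space M. RV (t + 1) \<omega> \<in> UNIV \<and> epsQ (t + 1) \<omega> \<in> B}"
    by auto
  then show ?thesis using Qkey[OF t X _ B, of UNIV] Qkey_UNIV[OF t X] by (simp add: mult.commute)
qed

lemma Q_marg:
  assumes t: "t \<ge> 1" and B[measurable]: "B \<in> sets borel"
  shows "emeasure Q (epsQ t -` B \<inter> space M) = emeasure NN B"
proof -
  have t0: "t - 1 \<ge> 0" and tt: "t - 1 + 1 = t" using t by auto
  have sp: "space M \<in> sets (F (t - 1))" by (metis sets.top space_F)
  have "emeasure Q (space M \<inter> (epsQ (t - 1 + 1) -` B \<inter> space M)) = emeasure Q (space M) * emeasure NN B"
    by (rule Q_indep_step[OF t0 sp B])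
  then show ?thesis using prob_space.emeasure_space_1[OF Qprob] unfolding tt by simp
qed

end


context lh
begin

lemma concl_distr:
  assumes t: "t \<ge> 1"
  shows "distributed Q lborel (epsQ t) (\<lambda>x. ennreal (std_normal_density x))"
  unfolding distributed_def
proof (intro conjI)
  show em: "epsQ t \<in> measurable Q lborel" by (simp add: meas_Q_iff)
  show "(\<lambda>x. ennreal (std_normal_density x)) \<in> borel_measurable lborel" by simp
  show "distr Q lborel (epsQ t) = NN"
  proof (rule measure_eqI)
    fix B assume "B \<in> sets (distr Q lborel (epsQ t))"
    then have B: "B \<in> sets borel" by simp
    have "emeasure (distr Q lborel (epsQ t)) B = emeasure Q (epsQ t -` B \<inter> space Q)"
      using B em by (subst emeasure_distr) auto
    also have "\<dots> = emeasure NN B" using Q_marg[OF t B] by simp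
    finally show "emeasure (distr Q lborel (epsQ t)) B = emeasure NN B" .
  qed simp
qed

lemma INT_F:
  assumes "finite J" "J \<noteq> {}" "J \<subseteq> {..t}" "\<And>j. j \<in> J \<Longrightarrow> B j \<in> sets borel"
  shows "(\<Inter>j\<in>J. epsQ j -` B j \<inter> space M) \<in> sets (F t)"
proof (rule sets.finite_INT[OF assms(1,2)])
  fix j assume j: "j \<in> J"
  then have "epsQ j \<in> borel_measurable (F t)" using epsQ_F assms(3) by blast
  then show "epsQ j -` B j \<inter> space M \<in> sets (F t)"
    using measurable_sets[of "epsQ j" "F t" borel "B j"] assms(4)[OF j] by simp
qed

lemma indep_core:
  "\<forall>J. finite J \<longrightarrow> J \<noteq> {} \<longrightarrow> J \<subseteq> {1..int n} \<longrightarrow> (\<forall>j\<in>J. B j \<in> sets borel) \<longrightarrow>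
     emeasure Q (\<Inter>j\<in>J. epsQ j -` B j \<inter> space M) = (\<Prod>j\<in>J. emeasure NN (B j))"
proof (induction n)
  case 0
  then show ?case by auto
next
  case (Suc n)
  show ?case
  proof (intro allI impI)
    fix J :: "int set" assume fin: "finite J" and ne: "J \<noteq> {}" and sub: "J \<subseteq> {1..int (Suc n)}" and B: "\<forall>j\<in>J. B j \<in> sets borel"
    define m where "m = int n + 1"
    show "emeasure Q (\<Inter>j\<in>J. epsQ j -` B j \<inter> space M) = (\<Prod>j\<in>J. emeasure NN (B j))"
    proof (cases "m \<in> J")
      case False
      have "J \<subseteq> {1..int n}"
      proof
        fix j assume j: "j \<in> J"
        then have "1 \<le> j" "j \<le> int n + 1" using sub by auto
        moreover have "j \<noteq> m" using j False by blast
        ultimately show "j \<in> {1..int n}" unfolding m_def by simp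
      qed
      then show ?thesis using Suc.IH fin ne B by blast
    next
      case True
      define J' where "J' = J - {m}"
      have JJ: "J = insert m J'" "m \<notin> J'" "finite J'" using True fin unfolding J'_def by auto
      have Bm: "B m \<in> sets borel" using B True by blast
      show ?thesis
      proof (cases "J' = {}")
        case True
        then have "J = {m}" using JJ by simp
        then show ?thesis using Q_marg[OF _ Bm] unfolding m_def by simp
      next
        case False
        have J'sub: "J' \<subseteq> {1..int n}"
        proof
          fix j assume j: "j \<in> J'"
          then have "1 \<le> j" "j \<le> int n + 1" "j \<noteq> m" using sub unfolding J'_def by auto
          then show "j \<in> {1..int n}" unfolding m_def by simp
        qed
        have XF: "(\<Inter>j\<in>J'. epsQ j -` B j \<inter> space M) \<in> sets (F (int n))"
        proof (rule INT_F)
          show "finite J'" by (rule JJ(3))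
          show "J' \<noteq> {}" by (rule False)
          show "J' \<subseteq> {..int n}" using J'sub by auto
          show "\<And>j. j \<in> J' \<Longrightarrow> B j \<in> sets borel" using B unfolding J'_def by blast
        qed
        have "(\<Inter>j\<in>J. epsQ j -` B j \<inter> space M) = (\<Inter>j\<in>J'. epsQ j -` B j \<inter> space M) \<inter> (epsQ (int n + 1) -` B m \<inter> space M)"
          unfolding JJ(1) m_def by auto
        then have "emeasure Q (\<Inter>j\<in>J. epsQ j -` B j \<inter> space M) = emeasure Q (\<Inter>j\<in>J'. epsQ j -` B j \<inter> space M) * emeasure NN (B m)"
          using Q_indep_step[OF _ XF Bm] by simp
        also have "emeasure Q (\<Inter>j\<in>J'. epsQ j -` B j \<inter> space M) = (\<Prod>j\<in>J'. emeasure NN (B j))"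
          using Suc.IH JJ False J'sub B J'_def by blast
        finally show ?thesis unfolding JJ(1) using JJ by (simp add: mult.commute)
      qed
    qed
  qed
qed

lemma concl_indep_vars: "prob_space.indep_vars Q (\<lambda>_. borel) epsQ {1..}"
  unfolding prob_space.indep_vars_def2[OF Qprob]
proof (intro conjI ballI)
  fix i :: int show "epsQ i \<in> measurable Q borel" by (simp add: meas_Q_iff)
next
  show "prob_space.indep_sets Q (\<lambda>i. {epsQ i -` A \<inter> space Q |A. A \<in> sets borel}) {1..}"
  proof (rule prob_space.indep_setsI[OF Qprob])
    fix i :: int show "{epsQ i -` A \<inter> space Q |A. A \<in> sets borel} \<subseteq> sets Q"
      by (auto simp: Qsets)
  next
    fix A :: "int \<Rightarrow> 'a set" and J :: "int set"
    assume ne: "J \<noteq> {}" and sub: "J \<subseteq> {1..}" and fin: "finite J"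
      and A: "\<forall>j\<in>J. A j \<in> {epsQ j -` A \<inter> space Q |A. A \<in> sets borel}"
    have "\<forall>j\<in>J. \<exists>C. C \<in> sets borel \<and> A j = epsQ j -` C \<inter> space M" using A by auto
    from bchoice[OF this] obtain B where B: "\<forall>j\<in>J. B j \<in> sets borel \<and> A j = epsQ j -` B j \<inter> space M"
      by blast
    define n where "n = nat (Max J)"
    have "J \<subseteq> {1..int n}"
    proof
      fix j assume j: "j \<in> J"
      have "1 \<le> j" using j sub by auto
      moreover have "j \<le> Max J" using Max_ge[OF fin j] .
      ultimately show "j \<in> {1..int n}" unfolding n_def by simp
    qed
    then have e: "emeasure Q (\<Inter>j\<in>J. epsQ j -` B j \<inter> space M) = (\<Prod>j\<in>J. emeasure NN (B j))"
      using indep_core[of n B] fin ne B by blast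
    have eA: "(\<Inter>j\<in>J. A j) = (\<Inter>j\<in>J. epsQ j -` B j \<inter> space M)" using B by auto
    have mA: "\<And>j. j \<in> J \<Longrightarrow> emeasure NN (B j) = ennreal (measure Q (A j))"
      using B Q_marg sub by (auto simp: emQ[symmetric])
    have "ennreal (measure Q (\<Inter>j\<in>J. A j)) = emeasure Q (\<Inter>j\<in>J. A j)" by (simp add: emQ)
    also have "\<dots> = (\<Prod>j\<in>J. emeasure NN (B j))" unfolding eA e ..
    also have "\<dots> = (\<Prod>j\<in>J. ennreal (measure Q (A j)))" by (rule prod.cong) (simp_all add: mA)
    also have "\<dots> = ennreal (\<Prod>j\<in>J. measure Q (A j))" by (simp add: prod_ennreal)
    finally show "measure Q (\<Inter>j\<in>J. A j) = (\<Prod>j\<in>J. measure Q (A j))"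
      by (simp add: prod_nonneg)
  qed
qed

end


context lh
begin

lemma ThQ:
  "lharg_Theta (kap * d) (\<lambda>i. kap * \<beta> i) (\<lambda>j. kap * \<alpha> j) (\<gamma> + lam + 1/2) p q RV epsQ t \<omega> = kap * Th t \<omega>"
proof -
  have e: "\<And>u. epsQ u \<omega> - (\<gamma> + lam + 1/2) * sqrt (RV u \<omega>) = eps u \<omega> - \<gamma> * sqrt (RV u \<omega>)"
    unfolding epsQ_def using no_arb by (simp add: algebra_simps)
  show ?thesis unfolding lharg_Theta_def Th_def e
    by (simp add: sum_distrib_left algebra_simps)
qed

lemma NN_UNIV: "emeasure NN UNIV = 1"
  using prob_space.emeasure_space_1[OF prob_std_normal] by simp

lemma concl_indep_set:
  assumes t: "t \<ge> 0"
  shows "prob_space.indep_set Q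
        (sets (sigma (space Q) (sets (F t) \<union> {RV (t + 1) -` B \<inter> space Q | B. B \<in> sets borel})))
        {epsQ (t + 1) -` B \<inter> space Q | B. B \<in> sets borel}"
proof -
  define P0 where "P0 = {X \<inter> (RV (t + 1) -` C \<inter> space M) | X C. X \<in> sets (F t) \<and> C \<in> sets borel}"
  define E' where "E' = {epsQ (t + 1) -` B \<inter> space M | B. B \<in> sets borel}"
  define R where "R = {RV (t + 1) -` B \<inter> space M | B. B \<in> sets borel}"
  have P0Q: "P0 \<subseteq> sets Q"
  proof
    fix a assume "a \<in> P0"
    then obtain X C where "a = X \<inter> (RV (t + 1) -` C \<inter> space M)" "X \<in> sets (F t)" "C \<in> sets borel"
      unfolding P0_def by blast
    moreover then have "X \<in> sets M" using F_sub by blast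
    ultimately show "a \<in> sets Q" unfolding Qsets by auto
  qed
  have E'Q: "E' \<subseteq> sets Q" unfolding E'_def Qsets by auto
  have ind0: "prob_space.indep_set Q P0 E'"
  proof (rule prob_space.indep_setI[OF Qprob P0Q E'Q])
    fix a b assume "a \<in> P0" "b \<in> E'"
    then obtain X C B where a: "a = X \<inter> (RV (t + 1) -` C \<inter> space M)" and X: "X \<in> sets (F t)"
      and C[measurable]: "C \<in> sets borel" and b: "b = epsQ (t + 1) -` B \<inter> space M" and B[measurable]: "B \<in> sets borel"
      unfolding P0_def E'_def by blast
    define I where "I = (\<integral>\<^sup>+\<omega>. indicator X \<omega> * emeasure (ncgamma \<delta> (kap * Th t \<omega>) (kap * \<theta>)) C \<partial>Q)"
    have XM: "X \<subseteq> space M" using X F_sub sets.sets_into_space by blast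
    have sp: "space M \<in> sets (F t)" by (metis sets.top space_F)
    have "a \<inter> b = X \<inter> {\<omega>\<in>space M. RV (t + 1) \<omega> \<in> C \<and> epsQ (t + 1) \<omega> \<in> B}" unfolding a b by auto
    then have e1: "emeasure Q (a \<inter> b) = emeasure NN B * I" using Qkey[OF t X C B] unfolding I_def by simp
    have "a = X \<inter> {\<omega>\<in>space M. RV (t + 1) \<omega> \<in> C \<and> epsQ (t + 1) \<omega> \<in> UNIV}" unfolding a by auto
    then have e2: "emeasure Q a = I" using Qkey[OF t X C, of UNIV] NN_UNIV unfolding I_def by simp
    have "b = space M \<inter> {\<omega>\<in>space M. RV (t + 1) \<omega> \<in> UNIV \<and> epsQ (t + 1) \<omega> \<in> B}" unfolding b by auto
    then have e3: "emeasure Q b = emeasure NN B"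
      using Qkey[OF t sp _ B, of UNIV] Qkey_UNIV[OF t sp] prob_space.emeasure_space_1[OF Qprob] by simp
    have "ennreal (measure Q (a \<inter> b)) = ennreal (measure Q a) * ennreal (measure Q b)"
      unfolding emQ[symmetric] e1 e2 e3 by (simp add: mult.commute)
    then show "measure Q (a \<inter> b) = measure Q a * measure Q b"
      by (simp add: ennreal_mult[symmetric])
  qed
  have stP: "Int_stable P0"
  proof (rule Int_stableI)
    fix a b assume "a \<in> P0" "b \<in> P0"
    then obtain X1 C1 X2 C2 where "a = X1 \<inter> (RV (t + 1) -` C1 \<inter> space M)" "X1 \<in> sets (F t)" "C1 \<in> sets borel"
      "b = X2 \<inter> (RV (t + 1) -` C2 \<inter> space M)" "X2 \<in> sets (F t)" "C2 \<in> sets borel"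
      unfolding P0_def by blast
    then show "a \<inter> b \<in> P0" unfolding P0_def
      by (intro CollectI exI[of _ "X1 \<inter> X2"] exI[of _ "C1 \<inter> C2"]) auto
  qed
  have stE: "Int_stable E'"
  proof (rule Int_stableI)
    fix a b assume "a \<in> E'" "b \<in> E'"
    then obtain A B where "A \<in> sets borel" "B \<in> sets borel" "a = epsQ (t + 1) -` A \<inter> space M" "b = epsQ (t + 1) -` B \<inter> space M"
      unfolding E'_def by blast
    then show "a \<inter> b \<in> E'" unfolding E'_def by (intro CollectI exI[of _ "A \<inter> B"]) auto
  qed
  have ind1: "prob_space.indep_set Q (sigma_sets (space Q) P0) (sigma_sets (space Q) E')"
    by (rule prob_space.indep_set_sigma_sets[OF Qprob ind0 stP stE])
  have gen_pow: "sets (F t) \<union> R \<subseteq> Pow (space M)"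
    unfolding R_def using F_sub sets.sets_into_space by blast
  have s1: "sets (sigma (space Q) (sets (F t) \<union> {RV (t + 1) -` B \<inter> space Q | B. B \<in> sets borel}))
      = sigma_sets (space M) (sets (F t) \<union> R)"
    unfolding R_def[symmetric] space_Q using gen_pow by (simp add: sets_measure_of R_def)
  have s2: "sigma_sets (space M) (sets (F t) \<union> R) \<subseteq> sigma_sets (space M) P0"
  proof (rule sigma_sets_mono, rule subsetI)
    fix x assume "x \<in> sets (F t) \<union> R"
    then show "x \<in> sigma_sets (space M) P0"
    proof
      assume x: "x \<in> sets (F t)"
      then have "x \<subseteq> space M" using F_sub sets.sets_into_space by blast
      then have eq: "x \<inter> (RV (t + 1) -` UNIV \<inter> space M) = x" by auto
      have "x \<in> P0" unfolding P0_def
        by (intro CollectI exI[of _ x] exI[of _ UNIV] conjI) (simp_all only: eq x, simp)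
      then show ?thesis by (rule sigma_sets.Basic)
    next
      assume "x \<in> R"
      then obtain C where C: "C \<in> sets borel" "x = RV (t + 1) -` C \<inter> space M" unfolding R_def by blast
      have sp: "space M \<in> sets (F t)" by (metis sets.top space_F)
      have eq: "space M \<inter> (RV (t + 1) -` C \<inter> space M) = x" using C by auto
      have "x \<in> P0" unfolding P0_def
        by (intro CollectI exI[of _ "space M"] exI[of _ C] conjI) (simp_all only: eq sp C)
      then show ?thesis by (rule sigma_sets.Basic)
    qed
  qed
  have s3: "{epsQ (t + 1) -` B \<inter> space Q | B. B \<in> sets borel} \<subseteq> sigma_sets (space Q) E'"
    unfolding E'_def by (auto intro: sigma_sets.Basic)
  show ?thesis
    using ind1 unfolding prob_space.indep_set_def[OF Qprob]
  proof (rule prob_space.indep_sets_mono_sets[OF Qprob])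
    fix i :: bool assume "i \<in> UNIV"
    show "(case i of True \<Rightarrow> sets (sigma (space Q) (sets (F t) \<union> {RV (t + 1) -` B \<inter> space Q | B. B \<in> sets borel}))
                | False \<Rightarrow> {epsQ (t + 1) -` B \<inter> space Q | B. B \<in> sets borel})
        \<subseteq> (case i of True \<Rightarrow> sigma_sets (space Q) P0 | False \<Rightarrow> sigma_sets (space Q) E')"
      using s1 s2 s3 by (cases i) simp_all
  qed
qed

lemma concl_condlaw:
  assumes t: "t \<ge> 0"
  shows "has_cond_law Q (F t) (RV (t + 1))
     (\<lambda>\<omega>. ncgamma \<delta> (lharg_Theta (kap * d) (\<lambda>i. kap * \<beta> i) (\<lambda>j. kap * \<alpha> j) (\<gamma> + lam + 1/2) p q RV epsQ t \<omega>) (kap * \<theta>))"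
  unfolding has_cond_law_def ThQ
proof
  fix B :: "real set" assume B[measurable]: "B \<in> sets borel"
  interpret sigma_finite_subalgebra Q "F t" by (rule sfsQ)
  define f :: "'a \<Rightarrow> real" where "f \<omega> = indicator B (RV (t + 1) \<omega>)" for \<omega>
  define g :: "'a \<Rightarrow> real" where "g \<omega> = measure (ncgamma \<delta> (kap * Th t \<omega>) (kap * \<theta>)) B" for \<omega>
  have fm[measurable]: "f \<in> borel_measurable Q" unfolding f_def meas_Q_iff by measurable
  have gF: "g \<in> borel_measurable (F t)"
    unfolding g_def measure_def by (intro borel_measurable_enn2real Ks_meas B)
  have gQ: "g \<in> borel_measurable Q" unfolding meas_Q_iff by (rule F_meas_M[OF gF])
  have emK: "\<And>\<omega>. \<omega> \<in> space M \<Longrightarrow> emeasure (ncgamma \<delta> (kap * Th t \<omega>) (kap * \<theta>)) B = ennreal (g \<omega>)"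
    unfolding g_def using Ks_prob by (simp add: finite_measure.emeasure_eq_measure prob_space.finite_measure)
  have g01: "\<And>\<omega>. \<omega> \<in> space M \<Longrightarrow> 0 \<le> g \<omega> \<and> g \<omega> \<le> 1"
    unfolding g_def using Ks_prob by (simp add: prob_space.prob_le_1)
  have intf: "integrable Q f"
    by (rule finite_measure.integrable_const_bound[OF prob_space.finite_measure[OF Qprob], where B=1]) (auto simp: f_def)
  have intg: "integrable Q g"
    by (rule finite_measure.integrable_const_bound[OF prob_space.finite_measure[OF Qprob], where B=1]) (use g01 gQ in auto)
  have "AE \<omega> in Q. real_cond_exp Q (F t) f \<omega> = g \<omega>"
  proof (rule real_cond_exp_charact)
    fix A assume A: "A \<in> sets (F t)"
    then have AQ[measurable]: "A \<in> sets Q" using F_sub Qsets by blast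
    have AM: "A \<subseteq> space M" using A F_sub sets.sets_into_space by blast
    have "ennreal (\<integral>x. indicator A x * f x \<partial>Q) = (\<integral>\<^sup>+x. ennreal (indicator A x * f x) \<partial>Q)"
      using integrable_mult_indicator[OF AQ intf] by (intro nn_integral_eq_integral[symmetric]) (simp_all add: f_def)
    also have "\<dots> = emeasure Q (A \<inter> {\<omega>\<in>space M. RV (t + 1) \<omega> \<in> B \<and> epsQ (t + 1) \<omega> \<in> UNIV})"
    proof -
      have S: "A \<inter> {\<omega>\<in>space M. RV (t + 1) \<omega> \<in> B \<and> epsQ (t + 1) \<omega> \<in> UNIV} \<in> sets Q"
      proof -
        have AMs[measurable]: "A \<in> sets M" using AQ Qsets by simp
        show ?thesis unfolding Qsets by measurable
      qed
      have "(\<integral>\<^sup>+x. ennreal (indicator A x * f x) \<partial>Q) = (\<integral>\<^sup>+x. indicator (A \<inter> {\<omega>\<in>space M. RV (t + 1) \<omega> \<in> B \<and> epsQ (t + 1) \<omega> \<in> UNIV}) x \<partial>Q)"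
        by (rule nn_integral_cong) (auto simp: f_def indicator_def)
      then show ?thesis using S by simp
    qed
    also have "\<dots> = (\<integral>\<^sup>+\<omega>. indicator A \<omega> * emeasure (ncgamma \<delta> (kap * Th t \<omega>) (kap * \<theta>)) B \<partial>Q)"
      using Qkey[OF t A B, of UNIV] NN_UNIV by simp
    also have "\<dots> = (\<integral>\<^sup>+x. ennreal (indicator A x * g x) \<partial>Q)"
      by (rule nn_integral_cong) (simp add: emK indicator_def)
    also have "\<dots> = ennreal (\<integral>x. indicator A x * g x \<partial>Q)"
      using integrable_mult_indicator[OF AQ intg] g01 by (intro nn_integral_eq_integral) (auto intro!: AE_I2)
    finally have "ennreal (\<integral>x. indicator A x * f x \<partial>Q) = ennreal (\<integral>x. indicator A x * g x \<partial>Q)" .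
    moreover have "0 \<le> (\<integral>x. indicator A x * f x \<partial>Q)" by (intro integral_nonneg_AE) (auto simp: f_def)
    moreover have "0 \<le> (\<integral>x. indicator A x * g x \<partial>Q)" using g01 by (intro integral_nonneg_AE) (auto intro!: AE_I2)
    ultimately show "(\<integral>x\<in>A. f x \<partial>Q) = (\<integral>x\<in>A. g x \<partial>Q)"
      unfolding set_lebesgue_integral_def by simp
  qed (use intf intg gF in simp_all)
  then show "AE \<omega> in Q. real_cond_exp Q (F t) (\<lambda>\<omega>'. indicator B (RV (t + 1) \<omega>')) \<omega> = measure (ncgamma \<delta> (kap * Th t \<omega>) (kap * \<theta>)) B"
    unfolding f_def g_def by simp
qed

lemma lharg_Q:
  "lharg Q (filt M eps RV) epsQ RV y r (- 1/2) \<delta> (kap * \<theta>) (kap * d) (\<gamma> + lam + 1/2) p q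
     (\<lambda>i. kap * \<beta> i) (\<lambda>j. kap * \<alpha> j)"
  unfolding lharg_def
proof (intro conjI allI impI ballI)
  fix t \<omega> assume "\<omega> \<in> space Q" then show "RV t \<omega> > 0" using RVpos by simp
next
  fix t show "epsQ t \<in> borel_measurable Q" by (simp add: meas_Q_iff)
next
  fix t show "RV t \<in> borel_measurable Q" by (simp add: meas_Q_iff)
next
  fix t :: int assume "t \<ge> 1" then show "distributed Q lborel (epsQ t) (\<lambda>x. ennreal (std_normal_density x))"
    by (rule concl_distr)
next
  show "prob_space.indep_vars Q (\<lambda>_. borel) epsQ {1..}" by (rule concl_indep_vars)
next
  fix t :: int assume "t \<ge> 0" then show "prob_space.indep_set Q
        (sets (sigma (space Q) (sets (F t) \<union> {RV (t + 1) -` B \<inter> space Q | B. B \<in> sets borel})))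
        {epsQ (t + 1) -` B \<inter> space Q | B. B \<in> sets borel}"
    by (rule concl_indep_set)
next
  fix t \<omega> assume \<omega>: "\<omega> \<in> space Q"
  have s: "sqrt (RV (t + 1) \<omega>) * sqrt (RV (t + 1) \<omega>) = RV (t + 1) \<omega>"
    using RVpos[of \<omega> "t + 1"] \<omega> by simp
  show "y (t + 1) \<omega> = r + - 1 / 2 * RV (t + 1) \<omega> + sqrt (RV (t + 1) \<omega>) * epsQ (t + 1) \<omega>"
    using yrel[of \<omega> t] \<omega> s no_arb unfolding epsQ_def by (simp add: algebra_simps)
next
  fix t :: int assume "t \<ge> 0"
  then show "has_cond_law Q (F t) (RV (t + 1))
     (\<lambda>\<omega>. ncgamma \<delta> (lharg_Theta (kap * d) (\<lambda>i. kap * \<beta> i) (\<lambda>j. kap * \<alpha> j) (\<gamma> + lam + 1/2) p q RV epsQ t \<omega>) (kap * \<theta>))"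
    by (rule concl_condlaw)
qed

end

theorem proposition3:
  fixes M Q :: "'a measure"
    and eps RV y :: "int \<Rightarrow> 'a \<Rightarrow> real"
    and r lam \<delta> \<theta> d \<gamma> \<nu>1 \<nu>2 :: real
    and p q :: nat
    and \<beta> \<alpha> :: "nat \<Rightarrow> real"
  assumes P: "prob_space M"
    and params: "\<delta> > 0" "\<theta> > 0" "d \<ge> 0" "p \<ge> 1" "q \<ge> 1"
      "\<forall>i\<in>{1..p}. \<beta> i \<ge> 0" "\<forall>j\<in>{1..q}. \<alpha> j \<ge> 0"
    and model: "lharg M (filt M eps RV) eps RV y r lam \<delta> \<theta> d \<gamma> p q \<beta> \<alpha>"
    and Qprob: "prob_space Q" and Qsets: "sets Q = sets M"
    and Qdef: "\<forall>T\<ge>0. \<forall>A\<in>sets (filt M eps RV T).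
                 emeasure Q A = (\<integral>\<^sup>+ \<omega>\<in>A. (\<Prod>s\<in>{0..<T}. sdf M (filt M eps RV) RV y \<nu>1 \<nu>2 s \<omega>) \<partial>M)"
    and no_arb: "\<nu>2 = lam + 1/2"
    and pos: "1 - \<theta> * (- lam\<^sup>2 / 2 - \<nu>1 + 1/8) > 0"
  shows "let \<kappa> = 1 / (1 - \<theta> * (- lam\<^sup>2 / 2 - \<nu>1 + 1/8)) in
         \<exists>eps'. lharg Q (filt M eps RV) eps' RV y r (- 1/2) \<delta> (\<kappa> * \<theta>) (\<kappa> * d) (\<gamma> + lam + 1/2) p q
                   (\<lambda>i. \<kappa> * \<beta> i) (\<lambda>j. \<kappa> * \<alpha> j)"
proof -
  interpret L: lh M Q eps RV y r lam \<delta> \<theta> d \<gamma> \<nu>1 \<nu>2 p q \<beta> \<alpha>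
    by (rule lh.intro) (use P params model Qprob Qsets Qdef no_arb pos in auto)
  have "lharg Q (filt M eps RV) L.epsQ RV y r (- 1/2) \<delta> (L.kap * \<theta>) (L.kap * d) (\<gamma> + lam + 1/2) p q
     (\<lambda>i. L.kap * \<beta> i) (\<lambda>j. L.kap * \<alpha> j)" by (rule L.lharg_Q)
  then show ?thesis unfolding Let_def L.kap_def L.Yst_def by blast
qed



end
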